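(* Let $p\ge 0$ and $k\ge 1$ be integers and $n\ge (p+1)k$. If $p\ge 1$ then $$\mathit{Gen}_p(n,k)=\bigcup_{j=1}^{k}\{0^{pj-i}1^{j-1}0^i1(0^p1)^{k-j}0^{n-(p+1)k}\ :\ 0\le i\le p-1\}\ \cup\ \{0^i1^k0^{n-i-k}\ :\ pk+1\le i\le n-k\}.$$ If $p=0$ then $\mathit{Gen}_0(n,k)=\{0^i1^k0^{n-i-k}\ :\ 0\le i\le n-k\}$. In all cases $|\mathit{Gen}_p(n,k)|=n-k+1-p$.
   Context: The weight of a binary word is its number of 1's. For integers $p,k\ge 0$ and $n\ge (p+1)k$, $C_n(p,k)$ is the set of binary words of length $n$ and weight $k$ such that every prefix contains at least $p$ times as many 0's as 1's (i.e. in every prefix, #0's $\ge p\cdot$ #1's). A homogeneous transposition of a binary word exchanges a 1 and a 0 such that no 1 occurs strictly between the two exchanged positions. For a set $S$ of binary words of the same length and weight and $\alpha\in S$, the list obtained by applying the greedy algorithm for $S$ to $\alpha$ is built as follows: start with the list $(\alpha)$; repeatedly, for the last word $w$ of the current list, among all words obtainable from $w$ by one homogeneous transposition that lie in $S$ and do not already occur in the list, choose the one obtained by transposing the leftmost possible 1 with (among transpositions of that 1) the leftmost possible 0, and append it; stop when no such word exists. $\mathcal{D}_p(\alpha)$ denotes the list obtained by applying the greedy algorithm for $C_n(p,k)$ to $\alpha\in C_n(p,k)$, and $\mathit{Gen}_p(n,k)$ is the set of $\alpha\in C_n(p,k)$ such that $\mathcal{D}_p(\alpha)$ contains every word of $C_n(p,k)$.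 *)

theory Defs
  imports Main
begin

text \<open>Binary words are lists of booleans; True stands for the letter 1, False for 0.\<close>

definition ones :: "bool list \<Rightarrow> nat" where
  "ones w = length (filter (\<lambda>b. b) w)"

definition zeros :: "bool list \<Rightarrow> nat" where
  "zeros w = length (filter (\<lambda>b. \<not> b) w)"

definition Cw :: "nat \<Rightarrow> nat \<Rightarrow> nat \<Rightarrow> bool list set" where
  "Cw n p k = {w. length w = n \<and> ones w = k \<and>
                  (\<forall>m \<le> n. p * ones (take m w) \<le> zeros (take m w))}"

definition swap_at :: "bool list \<Rightarrow> nat \<Rightarrow> nat \<Rightarrow> bool list" where
  "swap_at w i j = w[i := w ! j, j := w ! i]"

definition homog_transp :: "bool list \<Rightarrow> nat \<Rightarrow> nat \<Rightarrow> bool" where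
  "homog_transp w i j \<longleftrightarrow> i < length w \<and> j < length w \<and> w ! i \<and> \<not> w ! j \<and>
     (\<forall>m. min i j < m \<and> m < max i j \<longrightarrow> \<not> w ! m)"

definition greedy_cands :: "bool list set \<Rightarrow> bool list list \<Rightarrow> bool list \<Rightarrow> (nat \<times> nat) set" where
  "greedy_cands S L w = {(i, j). homog_transp w i j \<and> swap_at w i j \<in> S \<and> swap_at w i j \<notin> set L}"

definition greedy_next :: "bool list set \<Rightarrow> bool list list \<Rightarrow> bool list option" where
  "greedy_next S L =
     (let w = last L; P = greedy_cands S L w in
      if P = {} then None
      else (let i0 = (LEAST i. \<exists>j. (i, j) \<in> P);
                j0 = (LEAST j. (i0, j) \<in> P)
            in Some (swap_at w i0 j0)))"

fun greedy_iter :: "nat \<Rightarrow> bool list set \<Rightarrow> bool list list \<Rightarrow> bool list list" where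
  "greedy_iter 0 S L = L"
| "greedy_iter (Suc f) S L =
     (case greedy_next S L of None \<Rightarrow> L | Some v \<Rightarrow> greedy_iter f S (L @ [v]))"

text \<open>Since the list consists of
  distinct elements of S, at most card S steps are ever possible, so card S as fuel
  runs the algorithm until it stops.\<close>
definition greedy :: "bool list set \<Rightarrow> bool list \<Rightarrow> bool list list" where
  "greedy S \<alpha> = greedy_iter (card S) S [\<alpha>]"

definition Dp :: "nat \<Rightarrow> nat \<Rightarrow> nat \<Rightarrow> bool list \<Rightarrow> bool list list" where
  "Dp n p k \<alpha> = greedy (Cw n p k) \<alpha>"

definition Gen :: "nat \<Rightarrow> nat \<Rightarrow> nat \<Rightarrow> bool list set" where
  "Gen p n k = {\<alpha> \<in> Cw n p k. Cw n p k \<subseteq> set (Dp n p k \<alpha>)}"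

abbreviation zs :: "nat \<Rightarrow> bool list" where "zs a \<equiv> replicate a False"
abbreviation os :: "nat \<Rightarrow> bool list" where "os a \<equiv> replicate a True"

end

theory Submission
  imports Defs
begin

lemma ones_simps[simp]: "ones [] = 0" "ones (b#w) = (if b then Suc (ones w) else ones w)"
  "ones (xs@ys) = ones xs + ones ys" "ones (replicate n False) = 0" "ones (replicate n True) = n"
  by (auto simp: ones_def filter_replicate)

lemma zeros_simps[simp]: "zeros [] = 0" "zeros (b#w) = (if b then zeros w else Suc (zeros w))"
  "zeros (xs@ys) = zeros xs + zeros ys" "zeros (replicate n False) = n" "zeros (replicate n True) = 0"
  by (auto simp: zeros_def filter_replicate)

lemma ones_zeros: "ones w + zeros w = length w"
  by (induct w) auto

lemma Cw_alt: "Cw n p k = {w. length w = n \<and> ones w = k \<and> (\<forall>i\<le>n. (p+1) * ones (take i w) \<le> i)}"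
proof -
  have "p * ones (take i w) \<le> zeros (take i w) \<longleftrightarrow> (p+1) * ones (take i w) \<le> i" if "i \<le> length w" for i w
    using ones_zeros[of "take i w"] that by auto
  then show ?thesis unfolding Cw_def by auto
qed

lemma Cw_alt2: "w \<in> Cw n p k \<longleftrightarrow> length w = n \<and> ones w = k \<and> (\<forall>i. (p+1) * ones (take i w) \<le> i)"
proof -
  have "(\<forall>i\<le>n. (p+1) * ones (take i w) \<le> i) \<longleftrightarrow> (\<forall>i. (p+1) * ones (take i w) \<le> i)" if "length w = n"
  proof
    assume a: "\<forall>i\<le>n. (p+1) * ones (take i w) \<le> i"
    show "\<forall>i. (p+1) * ones (take i w) \<le> i"
    proof
      fix i show "(p+1) * ones (take i w) \<le> i"
        using a[rule_format, of "min i n"] that by (cases "i \<le> n") auto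
    qed
  qed auto
  then show ?thesis unfolding Cw_alt by auto
qed

lemma take_snoc: "take i (w@[b]) = (if i \<le> length w then take i w else w@[b])"
  by auto

lemma Cw_snocF: "w@[False] \<in> Cw (Suc m) p k \<longleftrightarrow> w \<in> Cw m p k"
proof -
  have "(\<forall>i. (p+1) * ones (take i (w@[False])) \<le> i) \<longleftrightarrow> (\<forall>i. (p+1) * ones (take i w) \<le> i)"
  proof
    assume a: "\<forall>i. (p+1) * ones (take i (w@[False])) \<le> i"
    show "\<forall>i. (p+1) * ones (take i w) \<le> i"
    proof
      fix i show "(p+1) * ones (take i w) \<le> i"
        using a[rule_format, of i] a[rule_format, of "length w"] by (cases "i \<le> length w") auto
    qed
  next
    assume a: "\<forall>i. (p+1) * ones (take i w) \<le> i"
    show "\<forall>i. (p+1) * ones (take i (w@[False])) \<le> i"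
    proof
      fix i show "(p+1) * ones (take i (w@[False])) \<le> i"
        using a[rule_format, of i] a[rule_format, of "length w"] by (cases "i \<le> length w") auto
    qed
  qed
  then show ?thesis unfolding Cw_alt2 by auto
qed

lemma Cw_snocT: "w@[True] \<in> Cw (Suc m) p (Suc k) \<longleftrightarrow> w \<in> Cw m p k \<and> (p+1) * (Suc k) \<le> Suc m"
proof -
  have "(\<forall>i. (p+1) * ones (take i (w@[True])) \<le> i) \<longleftrightarrow> (\<forall>i. (p+1) * ones (take i w) \<le> i) \<and> (p+1) * Suc (ones w) \<le> Suc (length w)"
  proof
    assume a: "\<forall>i. (p+1) * ones (take i (w@[True])) \<le> i"
    show "(\<forall>i. (p+1) * ones (take i w) \<le> i) \<and> (p+1) * Suc (ones w) \<le> Suc (length w)"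
    proof
      show "\<forall>i. (p+1) * ones (take i w) \<le> i"
      proof
        fix i show "(p+1) * ones (take i w) \<le> i"
          using a[rule_format, of i] a[rule_format, of "length w"] by (cases "i \<le> length w") auto
      qed
      show "(p+1) * Suc (ones w) \<le> Suc (length w)" using a[rule_format, of "Suc (length w)"] by simp
    qed
  next
    assume a: "(\<forall>i. (p+1) * ones (take i w) \<le> i) \<and> (p+1) * Suc (ones w) \<le> Suc (length w)"
    show "\<forall>i. (p+1) * ones (take i (w@[True])) \<le> i"
    proof
      fix i show "(p+1) * ones (take i (w@[True])) \<le> i"
        using a by (cases "i \<le> length w") (auto simp: take_snoc)
    qed
  qed
  then show ?thesis unfolding Cw_alt2 by auto
qed

lemma Cw_snocT': "0 < k \<Longrightarrow> w@[True] \<in> Cw (Suc m) p k \<longleftrightarrow> w \<in> Cw m p (k-1) \<and> (p+1) * k \<le> Suc m"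
  using Cw_snocT[of w m p "k-1"] by simp

lemma Cw_len: "w \<in> Cw n p k \<Longrightarrow> length w = n"
  by (simp add: Cw_def)

lemma Cw_bound: "w \<in> Cw n p k \<Longrightarrow> (p+1)*k \<le> n"
  unfolding Cw_alt2 by (metis take_all order_refl)

lemma finite_Cw: "finite (Cw n p k)"
proof -
  have "Cw n p k \<subseteq> {w. set w \<subseteq> UNIV \<and> length w = n}" by (auto simp: Cw_def)
  then show ?thesis using finite_lists_length_eq[of "UNIV::bool set" n] finite_subset by auto
qed

definition cands :: "bool list set \<Rightarrow> bool list set \<Rightarrow> bool list \<Rightarrow> (nat \<times> nat) set" where
  "cands S V w = {(i, j). homog_transp w i j \<and> swap_at w i j \<in> S \<and> swap_at w i j \<notin> V}"

definition gn :: "bool list set \<Rightarrow> bool list set \<Rightarrow> bool list \<Rightarrow> bool list option" where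
  "gn S V w = (let P = cands S V w in
      if P = {} then None
      else (let i0 = (LEAST i. \<exists>j. (i, j) \<in> P);
                j0 = (LEAST j. (i0, j) \<in> P)
            in Some (swap_at w i0 j0)))"

lemma greedy_next_gn: "greedy_next S L = gn S (set L) (last L)"
  unfolding greedy_next_def gn_def greedy_cands_def cands_def by (simp only: Let_def)

definition lexmin :: "(nat \<times> nat) set \<Rightarrow> nat \<Rightarrow> nat \<Rightarrow> bool" where
  "lexmin P i j \<longleftrightarrow> (i, j) \<in> P \<and> (\<forall>i' j'. (i', j') \<in> P \<longrightarrow> i < i' \<or> (i = i' \<and> j \<le> j'))"

lemma gn_None: "gn S V w = None \<longleftrightarrow> cands S V w = {}"
  unfolding gn_def by (simp add: Let_def)

lemma gn_lexmin: assumes "lexmin (cands S V w) i j"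
  shows "gn S V w = Some (swap_at w i j)"
proof -
  let ?P = "cands S V w"
  have ij: "(i,j) \<in> ?P" and m: "\<And>i' j'. (i', j') \<in> ?P \<Longrightarrow> i < i' \<or> (i = i' \<and> j \<le> j')"
    using assms unfolding lexmin_def by auto
  have i0: "(LEAST i. \<exists>j. (i, j) \<in> ?P) = i"
    by (rule Least_equality) (use ij m in force)+
  have j0: "(LEAST j'. (i, j') \<in> ?P) = j"
    by (rule Least_equality) (use ij m in force)+
  show ?thesis using ij unfolding gn_def Let_def i0 j0 by auto
qed

lemma lexmin_exists: assumes "P \<noteq> {}" shows "\<exists>i j. lexmin P i j"
proof -
  obtain a b where ab: "(a,b) \<in> P" using assms by auto
  define i0 where "i0 = (LEAST i. \<exists>j. (i, j) \<in> P)"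
  have "\<exists>j. (i0, j) \<in> P" unfolding i0_def by (rule LeastI) (use ab in auto)
  then obtain j1 where "(i0,j1) \<in> P" by auto
  define j0 where "j0 = (LEAST j. (i0, j) \<in> P)"
  have h: "(i0, j0) \<in> P" unfolding j0_def by (rule LeastI) fact
  have "lexmin P i0 j0" unfolding lexmin_def
  proof (intro conjI h allI impI)
    fix i' j' assume a: "(i', j') \<in> P"
    have "i0 \<le> i'" unfolding i0_def by (rule Least_le) (use a in auto)
    moreover have "i0 = i' \<Longrightarrow> j0 \<le> j'" unfolding j0_def by (rule Least_le) (use a in auto)
    ultimately show "i0 < i' \<or> i0 = i' \<and> j0 \<le> j'" by auto
  qed
  then show ?thesis by auto
qed

lemma gn_SomeE: assumes "gn S V w = Some v"
  obtains i j where "lexmin (cands S V w) i j" "v = swap_at w i j"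
proof -
  have "cands S V w \<noteq> {}" using assms gn_None[of S V w] by auto
  then obtain i j where "lexmin (cands S V w) i j" using lexmin_exists by blast
  with gn_lexmin[OF this] assms that show ?thesis by auto
qed

lemma gn_Some_mem: "gn S V w = Some v \<Longrightarrow> v \<in> S \<and> v \<notin> V"
  by (erule gn_SomeE) (auto simp: lexmin_def cands_def)

inductive Run :: "bool list set \<Rightarrow> bool list list \<Rightarrow> bool list list \<Rightarrow> bool" where
  stop: "greedy_next S L = None \<Longrightarrow> Run S L L"
| step: "greedy_next S L = Some v \<Longrightarrow> Run S (L @ [v]) R \<Longrightarrow> Run S L R"

lemma Run_det: "Run S L R \<Longrightarrow> Run S L R' \<Longrightarrow> R = R'"
proof (induction arbitrary: R' rule: Run.induct)
  case (stop S L)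
  from stop(2) show ?case
  proof (cases rule: Run.cases)
    case (step v) with stop(1) show ?thesis by simp
  qed simp
next
  case (step S L v R)
  from step.prems show ?case
  proof (cases rule: Run.cases)
    case stop with step(1) show ?thesis by simp
  next
    case (step v') with \<open>greedy_next S L = Some v\<close> have "v' = v" by simp
    with step show ?thesis using \<open>Run S (L @ [v]) R' \<Longrightarrow> R = R'\<close> by blast
  qed
qed

lemma Run_final: "Run S L R \<Longrightarrow> greedy_next S R = None"
  by (induction rule: Run.induct) auto

lemma Run_prefix: "Run S L R \<Longrightarrow> \<exists>M. R = L @ M"
  by (induction rule: Run.induct) auto

lemma Run_subset: "Run S L R \<Longrightarrow> set L \<subseteq> S \<Longrightarrow> set R \<subseteq> S"
  by (induction rule: Run.induct) (auto simp: greedy_next_gn dest: gn_Some_mem)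

lemma Run_last: "Run S L R \<Longrightarrow> L \<noteq> [] \<Longrightarrow> R \<noteq> []"
  using Run_prefix by fastforce

lemma greedy_iter_Run:
  assumes "finite S" "set L \<subseteq> S" "distinct L" "L \<noteq> []" "card S \<le> f + length L"
  shows "Run S L (greedy_iter f S L)"
  using assms
proof (induction f arbitrary: L)
  case 0
  have "card (set L) = length L" using 0 distinct_card by blast
  then have "set L = S" using 0 card_subset_eq by (metis add_0 card_mono le_antisym)
  then have "greedy_next S L = None" by (auto simp: greedy_next_gn gn_None cands_def)
  then show ?case by (simp add: Run.stop)
next
  case (Suc f)
  show ?case
  proof (cases "greedy_next S L")
    case None then show ?thesis by (simp add: Run.stop)
  next
    case (Some v)
    then have v: "v \<in> S" "v \<notin> set L" using gn_Some_mem by (auto simp: greedy_next_gn)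
    have "Run S (L@[v]) (greedy_iter f S (L@[v]))"
      by (rule Suc.IH) (use Suc.prems v in auto)
    then show ?thesis using Some by (simp add: Run.step)
  qed
qed

lemma greedy_Run: "finite S \<Longrightarrow> \<alpha> \<in> S \<Longrightarrow> Run S [\<alpha>] (greedy S \<alpha>)"
  unfolding greedy_def by (rule greedy_iter_Run) auto

lemma homog_len: "homog_transp w i j \<Longrightarrow> i < length w \<and> j < length w"
  by (simp add: homog_transp_def)

lemma homog_snoc: "i < length w \<Longrightarrow> j < length w \<Longrightarrow> homog_transp (w@[b]) i j \<longleftrightarrow> homog_transp w i j"
  unfolding homog_transp_def by (auto simp: nth_append)

lemma swap_snoc: "i < length w \<Longrightarrow> j < length w \<Longrightarrow> swap_at (w@[b]) i j = swap_at w i j @ [b]"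
  unfolding swap_at_def by (auto simp: nth_append list_update_append)

lemma cands_half: "i < length w \<Longrightarrow> j < length w \<Longrightarrow>
   (i,j) \<in> cands S V (w@[b]) \<longleftrightarrow> (i,j) \<in> cands {u. u@[b] \<in> S} {u. u@[b] \<in> V} w"
  unfolding cands_def by (simp add: homog_snoc swap_snoc)

lemma half_some:
  assumes "gn {u. u@[b] \<in> S} {u. u@[b] \<in> V} w = Some x"
  shows "gn S V (w@[b]) = Some (x@[b])"
proof -
  let ?H = "{u. u@[b] \<in> S}" and ?Vb = "{u. u@[b] \<in> V}"
  obtain i j where lm: "lexmin (cands ?H ?Vb w) i j" and x: "x = swap_at w i j"
    using assms by (rule gn_SomeE)
  have ij: "(i,j) \<in> cands ?H ?Vb w" using lm by (simp add: lexmin_def)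
  then have hij: "homog_transp w i j" by (simp add: cands_def)
  then have bnd: "i < length w" "j < length w" and wi: "w ! i" by (auto simp: homog_transp_def)
  have "lexmin (cands S V (w@[b])) i j" unfolding lexmin_def
  proof (intro conjI allI impI)
    show "(i, j) \<in> cands S V (w @ [b])" using cands_half[OF bnd] ij by simp
    fix i' j' assume a: "(i', j') \<in> cands S V (w @ [b])"
    then have h': "homog_transp (w@[b]) i' j'" by (simp add: cands_def)
    then have "i' \<le> length w" "j' \<le> length w" by (auto dest: homog_len)
    show "i < i' \<or> i = i' \<and> j \<le> j'"
    proof (cases "i' < length w \<and> j' < length w")
      case True
      then have "(i', j') \<in> cands ?H ?Vb w" using cands_half a by blast
      then show ?thesis using lm by (auto simp: lexmin_def)
    next
      case False
      show ?thesis
      proof (cases "i' = length w")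
        case True then show ?thesis using bnd by simp
      next
        case F: False
        with False \<open>i' \<le> length w\<close> \<open>j' \<le> length w\<close> have i'l: "i' < length w" and j'l: "j' = length w" by auto
        have nb: "\<And>m. i' < m \<Longrightarrow> m < length w \<Longrightarrow> \<not> w ! m"
          using h' j'l i'l unfolding homog_transp_def by (auto simp: nth_append)
        have "\<not> i' < i" using nb[of i] wi bnd by auto
        then show ?thesis using j'l bnd by auto
      qed
    qed
  qed
  from gn_lexmin[OF this] show ?thesis using x bnd by (simp add: swap_snoc)
qed

lemma half_none_cands:
  assumes "gn {u. u@[b] \<in> S} {u. u@[b] \<in> V} w = None" "(i,j) \<in> cands S V (w@[b])"
  shows "i = length w \<or> j = length w"
proof (rule ccontr)
  assume "\<not> (i = length w \<or> j = length w)"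
  moreover have "i \<le> length w" "j \<le> length w" using assms(2) by (auto simp: cands_def dest: homog_len)
  ultimately have "i < length w" "j < length w" by auto
  then have "(i,j) \<in> cands {u. u@[b] \<in> S} {u. u@[b] \<in> V} w" using cands_half assms(2) by blast
  then show False using assms(1) by (simp add: gn_None)
qed

lemma swap_last1: "j < length w \<Longrightarrow> \<not> w ! j \<Longrightarrow> swap_at (w@[True]) (length w) j = w[j:=True] @ [False]"
  unfolding swap_at_def by (auto simp: nth_append list_update_append)

lemma swap_last0: "i < length w \<Longrightarrow> w ! i \<Longrightarrow> swap_at (w@[False]) i (length w) = w[i:=False] @ [True]"
  unfolding swap_at_def by (auto simp: nth_append list_update_append)

lemma half0_stop:
  assumes "gn {u. u@[False] \<in> S} {u. u@[False] \<in> V} w = None"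
    and "\<And>v. v@[True] \<in> S \<Longrightarrow> v@[True] \<in> V"
  shows "gn S V (w@[False]) = None"
proof -
  have "cands S V (w@[False]) = {}"
  proof (rule ccontr)
    assume "cands S V (w@[False]) \<noteq> {}"
    then obtain i j where ij: "(i,j) \<in> cands S V (w@[False])" by auto
    then have h: "homog_transp (w@[False]) i j" and s: "swap_at (w@[False]) i j \<in> S" "swap_at (w@[False]) i j \<notin> V"
      by (auto simp: cands_def)
    have "i \<noteq> length w" using h by (auto simp: homog_transp_def nth_append)
    then have j: "j = length w" using half_none_cands[OF assms(1) ij] by auto
    have il: "i < length w" "w ! i" using h j by (auto simp: homog_transp_def nth_append split: if_splits)
    then show False using s assms(2) by (simp add: j swap_last0)
  qed
  then show ?thesis by (simp add: gn_None)
qed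

lemma half0_move:
  assumes "gn {u. u@[False] \<in> S} {u. u@[False] \<in> V} w = None"
    and w: "w = a @ [True] @ zs c"
    and "(a @ zs (Suc c)) @ [True] \<in> S" "(a @ zs (Suc c)) @ [True] \<notin> V"
  shows "gn S V (w@[False]) = Some ((a @ zs (Suc c)) @ [True])"
proof -
  have sw: "swap_at (w@[False]) (length a) (length w) = (a @ zs (Suc c)) @ [True]"
  proof -
    have "w[length a := False] = a @ zs (Suc c)" using w by (simp add: list_update_append)
    moreover have "length a < length w" "w ! length a" using w by (auto simp: nth_append)
    ultimately show ?thesis using swap_last0[of "length a" w] by simp
  qed
  have hm: "homog_transp (w@[False]) (length a) (length w)"
    using w by (auto simp: homog_transp_def nth_append)
  have "lexmin (cands S V (w@[False])) (length a) (length w)" unfolding lexmin_def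
  proof (intro conjI allI impI)
    show "(length a, length w) \<in> cands S V (w @ [False])" using hm sw assms by (simp add: cands_def)
    fix i' j' assume a: "(i', j') \<in> cands S V (w @ [False])"
    then have h: "homog_transp (w@[False]) i' j'" by (simp add: cands_def)
    have "i' \<noteq> length w" using h by (auto simp: homog_transp_def nth_append)
    then have j: "j' = length w" using half_none_cands[OF assms(1) a] by auto
    have il: "i' < length w" "w ! i'" using h j by (auto simp: homog_transp_def nth_append split: if_splits)
    have nb: "\<And>m. i' < m \<Longrightarrow> m < length w \<Longrightarrow> \<not> w ! m"
      using h j il unfolding homog_transp_def by (auto simp: nth_append)
    have "\<not> i' < length a" using nb[of "length a"] w by (auto simp: nth_append)
    moreover have "\<not> i' > length a"
    proof
      assume "i' > length a"
      then obtain d where d: "i' = Suc (length a + d)" using less_imp_Suc_add by blast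
      then have "w ! i' = zs c ! d" using w by (simp add: nth_append)
      moreover have "d < c" using il(1) w d by simp
      ultimately show False using il(2) by simp
    qed
    ultimately show "length a < i' \<or> length a = i' \<and> length w \<le> j'" using j by auto
  qed
  from gn_lexmin[OF this] sw show ?thesis by simp
qed

lemma half1_stop:
  assumes "gn {u. u@[True] \<in> S} {u. u@[True] \<in> V} w = None"
    and "\<And>j. j < length w \<Longrightarrow> homog_transp (w@[True]) (length w) j \<Longrightarrow> w[j:=True]@[False] \<notin> S \<or> w[j:=True]@[False] \<in> V"
  shows "gn S V (w@[True]) = None"
proof -
  have "cands S V (w@[True]) = {}"
  proof (rule ccontr)
    assume "cands S V (w@[True]) \<noteq> {}"
    then obtain i j where ij: "(i,j) \<in> cands S V (w@[True])" by auto
    then have h: "homog_transp (w@[True]) i j" and s: "swap_at (w@[True]) i j \<in> S" "swap_at (w@[True]) i j \<notin> V"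
      by (auto simp: cands_def)
    have "j \<noteq> length w" using h by (auto simp: homog_transp_def nth_append)
    then have i: "i = length w" using half_none_cands[OF assms(1) ij] by auto
    have jl: "j < length w" "\<not> w ! j" using h i by (auto simp: homog_transp_def nth_append split: if_splits)
    then show False using s assms(2)[OF jl(1)] h i by (simp add: swap_last1)
  qed
  then show ?thesis by (simp add: gn_None)
qed

lemma half1_move:
  assumes "gn {u. u@[True] \<in> S} {u. u@[True] \<in> V} w = None"
    and j0: "j0 < length w" "homog_transp (w@[True]) (length w) j0" "w[j0:=True]@[False] \<in> S" "w[j0:=True]@[False] \<notin> V"
    and less: "\<And>j. j < j0 \<Longrightarrow> homog_transp (w@[True]) (length w) j \<Longrightarrow> w[j:=True]@[False] \<notin> S \<or> w[j:=True]@[False] \<in> V"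
  shows "gn S V (w@[True]) = Some (w[j0:=True]@[False])"
proof -
  have nj0: "\<not> w ! j0" using j0 by (auto simp: homog_transp_def nth_append)
  have "lexmin (cands S V (w@[True])) (length w) j0" unfolding lexmin_def
  proof (intro conjI allI impI)
    show "(length w, j0) \<in> cands S V (w @ [True])" using j0 nj0 by (simp add: cands_def swap_last1)
    fix i' j' assume a: "(i', j') \<in> cands S V (w @ [True])"
    then have h: "homog_transp (w@[True]) i' j'" by (simp add: cands_def)
    have "j' \<noteq> length w" using h by (auto simp: homog_transp_def nth_append)
    then have i: "i' = length w" using half_none_cands[OF assms(1) a] by auto
    have jl: "j' < length w" "\<not> w ! j'" using h i by (auto simp: homog_transp_def nth_append split: if_splits)
    have "\<not> j' < j0" using less[of j'] a i jl by (auto simp: cands_def swap_last1)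
    then show "length w < i' \<or> length w = i' \<and> j0 \<le> j'" using i by auto
  qed
  from gn_lexmin[OF this] show ?thesis using j0 nj0 by (simp add: swap_last1)
qed

lemma homog1_lastT: assumes "w \<noteq> []" "last w" shows "\<not> homog_transp (w@[True]) (length w) j"
proof
  assume h: "homog_transp (w@[True]) (length w) j"
  have wl: "w ! (length w - 1)" using assms by (simp add: last_conv_nth)
  have j: "j < length w" "\<not> w ! j" using h by (auto simp: homog_transp_def nth_append split: if_splits)
  have nb: "\<And>m. j < m \<Longrightarrow> m < length w \<Longrightarrow> \<not> w ! m"
    using h j unfolding homog_transp_def by (auto simp: nth_append)
  show False
  proof (cases "j = length w - 1")
    case True then show ?thesis using wl j by simp
  next
    case False then show ?thesis using nb[of "length w - 1"] wl j assms(1) by simp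
  qed
qed

lemma lift_aux:
  "Run H L R \<Longrightarrow> H = {u. u@[b] \<in> S} \<Longrightarrow> P \<noteq> [] \<Longrightarrow> L \<noteq> [] \<Longrightarrow> last P = last L @ [b] \<Longrightarrow>
   {u. u@[b] \<in> set P} = set L \<Longrightarrow> Run S (P @ map (\<lambda>u. u@[b]) (drop (length L) R)) Q \<Longrightarrow> Run S P Q"
proof (induction arbitrary: P rule: Run.induct)
  case (stop H L) then show ?case by simp
next
  case (step H L v R)
  obtain M where RM: "R = (L @ [v]) @ M" using Run_prefix[OF step(2)] by blast
  have dr: "drop (length L) R = v # drop (length (L@[v])) R" using RM by simp
  have "gn H (set L) (last L) = Some v" using step(1) by (simp add: greedy_next_gn)
  then have "gn {u. u@[b] \<in> S} {u. u@[b] \<in> set P} (last L) = Some v" using step.prems(1) step.prems(5) by simp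
  then have gs: "gn S (set P) (last P) = Some (v @ [b])" using half_some step.prems(4) by simp
  have "Run S (P @ [v@[b]]) Q"
  proof (rule step.IH)
    show "{u. u @ [b] \<in> set (P @ [v @ [b]])} = set (L @ [v])" using step.prems(5) by auto
    show "Run S ((P @ [v @ [b]]) @ map (\<lambda>u. u @ [b]) (drop (length (L @ [v])) R)) Q"
      using step.prems(6) dr by simp
  qed (use step in auto)
  then show ?case using gs by (simp add: greedy_next_gn Run.step)
qed

lemma lift_phase:
  assumes "Run {u. u@[b] \<in> S} [\<beta>] R" "\<forall>u. u@[b] \<notin> set Pp" "Run S (Pp @ map (\<lambda>u. u@[b]) R) Q"
  shows "Run S (Pp @ [\<beta>@[b]]) Q"
proof -
  obtain M where RM: "R = [\<beta>] @ M" using Run_prefix[OF assms(1)] by blast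
  show ?thesis
  proof (rule lift_aux[OF assms(1) refl])
    show "{u. u @ [b] \<in> set (Pp @ [\<beta> @ [b]])} = set [\<beta>]" using assms(2) by auto
    show "Run S ((Pp @ [\<beta> @ [b]]) @ map (\<lambda>u. u @ [b]) (drop (length [\<beta>]) R)) Q"
      using assms(3) RM by simp
  qed auto
qed

lemma lift_final:
  assumes "Run {u. u@[b] \<in> S} [\<beta>] R" "\<forall>u. u@[b] \<notin> set Pp"
  shows "gn {u. u@[b] \<in> S} {u. u@[b] \<in> set (Pp @ map (\<lambda>u. u@[b]) R)} (last R) = None"
    "last (Pp @ map (\<lambda>u. u@[b]) R) = last R @ [b]"
proof -
  have "R \<noteq> []" using Run_last[OF assms(1)] by simp
  have "{u. u@[b] \<in> set (Pp @ map (\<lambda>u. u@[b]) R)} = set R" using assms(2) by auto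
  then show "gn {u. u@[b] \<in> S} {u. u@[b] \<in> set (Pp @ map (\<lambda>u. u@[b]) R)} (last R) = None"
    using Run_final[OF assms(1)] by (simp add: greedy_next_gn)
  show "last (Pp @ map (\<lambda>u. u@[b]) R) = last R @ [b]" using \<open>R \<noteq> []\<close> by (simp add: last_map)
qed

lemma greedy_eq: "finite S \<Longrightarrow> \<alpha> \<in> S \<Longrightarrow> Run S [\<alpha>] Q \<Longrightarrow> greedy S \<alpha> = Q"
  using greedy_Run Run_det by blast

definition omega :: "nat \<Rightarrow> nat \<Rightarrow> bool list" where
  "omega n k = zs (n - k) @ os k"

inductive G :: "nat \<Rightarrow> nat \<Rightarrow> nat \<Rightarrow> bool list \<Rightarrow> bool" for p where
  om: "(p+1)*k \<le> n \<Longrightarrow> G p n k (omega n k)"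
| z: "G p n k w \<Longrightarrow> (p+1)*k \<le> n \<Longrightarrow> G p (Suc n) k (w@[False])"
| o: "G p n k w \<Longrightarrow> Suc n = (p+1)*(Suc k) \<Longrightarrow> G p (Suc n) (Suc k) (w@[True])"

lemma ones_take_zs: "ones (take i (zs a)) = 0" by (simp add: take_replicate)
lemma ones_take_os: "ones (take i (os a)) = min i a" by (simp add: take_replicate)

lemma omega_C: assumes "(p+1)*k \<le> n" shows "omega n k \<in> Cw n p k"
proof -
  have kn: "k + p*k \<le> n" using assms by (simp add: algebra_simps)
  have "(p+1) * ones (take i (omega n k)) \<le> i" for i
  proof (cases "i \<le> n - k")
    case True then show ?thesis by (simp add: omega_def take_append ones_take_zs)
  next
    case False
    have e: "ones (take i (omega n k)) = min (i - (n-k)) k" using False by (simp add: omega_def take_append ones_take_os)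
    have "p * min (i - (n-k)) k \<le> p * k" by simp
    then have "(p+1) * min (i - (n-k)) k \<le> min (i - (n-k)) k + p*k" by (simp add: algebra_simps)
    moreover have "min (i - (n-k)) k \<le> i - (n-k)" by simp
    ultimately have "(p+1) * min (i - (n-k)) k \<le> i" using False kn by linarith
    then show ?thesis using e by simp
  qed
  then show ?thesis unfolding Cw_alt2 using kn by (simp add: omega_def)
qed

lemma G_C: "G p n k w \<Longrightarrow> w \<in> Cw n p k"
proof (induction rule: G.induct)
  case (om k n) then show ?case by (rule omega_C)
next
  case (z n k w) then show ?case by (simp add: Cw_snocF)
next
  case (o n k w) then show ?case by (simp add: Cw_snocT)
qed

lemma omega_snocT: "k \<le> n \<Longrightarrow> omega (Suc n) (Suc k) = omega n k @ [True]"
  by (simp add: omega_def replicate_append_same)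

lemma omega_snocF: "k \<le> n \<Longrightarrow> omega (Suc n) 0 = omega n 0 @ [False]"
  by (simp add: omega_def replicate_append_same)

lemma omega_not_F: "0 < k \<Longrightarrow> omega n k \<noteq> w @ [False]"
proof
  assume "0 < k" "omega n k = w @ [False]"
  then have "last (omega n k) = False" by simp
  moreover have "last (omega n k) = True" using \<open>0 < k\<close> by (simp add: omega_def)
  ultimately show False by simp
qed

lemma G_zs: "G p n k w \<Longrightarrow> (p+1)*k \<le> n \<Longrightarrow> G p (n + c) k (w @ zs c)"
proof (induction c)
  case 0 then show ?case by simp
next
  case (Suc c)
  have "G p (Suc (n + c)) k ((w @ zs c) @ [False])" by (rule G.z) (use Suc in auto)
  then show ?case by (simp add: replicate_append_same)
qed

lemma G_inv0: assumes "0 < k" shows "G p (Suc m) k (\<beta>@[False]) \<longleftrightarrow> G p m k \<beta> \<and> (p+1)*k \<le> m"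
proof
  assume "G p (Suc m) k (\<beta>@[False])"
  then show "G p m k \<beta> \<and> (p+1)*k \<le> m"
  proof (cases rule: G.cases)
    case om then show ?thesis using omega_not_F[OF assms] by metis
  qed auto
qed (auto intro: G.z)

lemma G_inv1: assumes "0 < k"
  shows "G p (Suc m) k (\<beta>@[True]) \<longleftrightarrow> (\<beta>@[True] = omega (Suc m) k \<and> (p+1)*k \<le> Suc m) \<or> (Suc m = (p+1)*k \<and> G p m (k-1) \<beta>)"
proof
  assume "G p (Suc m) k (\<beta>@[True])"
  then show "(\<beta>@[True] = omega (Suc m) k \<and> (p+1)*k \<le> Suc m) \<or> (Suc m = (p+1)*k \<and> G p m (k-1) \<beta>)"
  proof (cases rule: G.cases)
    case om then show ?thesis by auto
  next
    case (o k') then show ?thesis by auto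
  qed auto
next
  assume "(\<beta>@[True] = omega (Suc m) k \<and> (p+1)*k \<le> Suc m) \<or> (Suc m = (p+1)*k \<and> G p m (k-1) \<beta>)"
  then show "G p (Suc m) k (\<beta>@[True])"
  proof
    assume "\<beta>@[True] = omega (Suc m) k \<and> (p+1)*k \<le> Suc m"
    then show ?thesis by (metis G.om)
  next
    assume a: "Suc m = (p+1)*k \<and> G p m (k-1) \<beta>"
    then show ?thesis using G.o[of p m "k-1" \<beta>] assms by simp
  qed
qed

lemma Cw0: "Cw n p 0 = {zs n}"
proof -
  have "w = zs (length w)" if "ones w = 0" for w
    using that by (induct w) (auto split: if_splits)
  then show ?thesis by (auto simp: Cw_alt2 take_replicate)
qed

lemma G0: "G p n 0 w \<longleftrightarrow> w = zs n"
proof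
  assume "G p n 0 w" then show "w = zs n" using G_C Cw0 by blast
next
  assume "w = zs n" then show "G p n 0 w" using G.om[of p 0 n] by (simp add: omega_def)
qed

lemma decomp_last_one: "True \<in> set w \<Longrightarrow> \<exists>a c. w = a @ [True] @ zs c"
proof (induction w rule: rev_induct)
  case Nil then show ?case by simp
next
  case (snoc x xs)
  show ?case
  proof (cases x)
    case True then show ?thesis by (intro exI[of _ xs] exI[of _ 0]) simp
  next
    case False
    then have "True \<in> set xs" using snoc by simp
    then obtain a c where "xs = a @ [True] @ zs c" using snoc by blast
    then show ?thesis using False by (intro exI[of _ a] exI[of _ "Suc c"]) (simp add: replicate_append_same)
  qed
qed

lemma last_one_pos: assumes "a @ [True] @ zs c \<in> Cw m p k" shows "(p+1)*k \<le> Suc (length a)"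
proof -
  have "ones (a @ [True] @ zs c) = k" using assms by (simp add: Cw_def)
  then have "ones (take (Suc (length a)) (a @ [True] @ zs c)) = k" by simp
  then show ?thesis using assms unfolding Cw_alt2 by metis
qed

lemma move_right_C: assumes "a @ [True] @ zs c \<in> Cw m p k" shows "a @ zs (Suc c) \<in> Cw m p (k-1)"
proof -
  have "(p+1) * ones (take i (a @ zs (Suc c))) \<le> i" for i
  proof -
    have "(p+1) * ones (take i (a @ [True] @ zs c)) \<le> i" using assms unfolding Cw_alt2 by blast
    moreover have "ones (take i (a @ zs (Suc c))) \<le> ones (take i (a @ [True] @ zs c))"
    proof (cases "i \<le> length a")
      case False then show ?thesis by (cases "i - length a") (auto simp: take_append ones_take_zs)
    qed (auto simp: take_append)
    ultimately show ?thesis by (meson le_trans mult_le_mono2)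
  qed
  moreover have "length (a @ zs (Suc c)) = m" "ones (a @ zs (Suc c)) = k - 1" using assms by (auto simp: Cw_def)
  ultimately show ?thesis unfolding Cw_alt2 by blast
qed

lemma G_C1: assumes "w \<in> Cw m p 1" shows "G p m 1 w"
proof -
  have o1: "ones w = 1" using assms by (simp add: Cw_def)
  have "True \<in> set w"
  proof (rule ccontr)
    assume "True \<notin> set w"
    then have "ones w = 0" by (induct w) auto
    then show False using o1 by simp
  qed
  then obtain a c where w: "w = a @ [True] @ zs c" using decomp_last_one by blast
  have "ones a = 0" using assms w by (simp add: Cw_def)
  then have a: "a = zs (length a)" by (induct a) (auto split: if_splits)
  have le: "p+1 \<le> Suc (length a)" using last_one_pos[of a c m p 1] assms w by simp
  have "G p (Suc (length a)) 1 (omega (Suc (length a)) 1)" by (rule G.om) (use le in simp)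
  then have "G p (Suc (length a) + c) 1 (omega (Suc (length a)) 1 @ zs c)" by (rule G_zs) (use le in simp)
  moreover have "omega (Suc (length a)) 1 @ zs c = w" using a w by (simp add: omega_def)
  moreover have "Suc (length a) + c = m" using assms w by (simp add: Cw_def)
  ultimately show ?thesis by simp
qed

definition Ef :: "nat \<Rightarrow> nat \<Rightarrow> nat \<Rightarrow> bool list" where
 "Ef p m k = (if k = 0 then zs m
  else if p = 0 then (if even k then os k @ zs (m-k) else if m = k then os k else zs (m-1-k) @ os k @ [False])
  else if even k then zs (p*k-1) @ os (k-1) @ [False, True] @ zs (m - (p+1)*k)
  else if m = (p+1)*k then (if k = 1 then zs p @ [True] else zs (p*(k-1)-1) @ os (k-2) @ [False,True] @ zs p @ [True])
  else zs (m-1-k) @ os k @ [False])"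

lemma Ef_0: "Ef p m 0 = zs m" by (simp add: Ef_def)
lemma Ef_p0_even: "k \<noteq> 0 \<Longrightarrow> even k \<Longrightarrow> Ef 0 m k = os k @ zs (m-k)" by (simp add: Ef_def)
lemma Ef_p0_odd_t: "odd k \<Longrightarrow> Ef 0 k k = os k" by (auto simp add: Ef_def)
lemma Ef_p0_odd: "odd k \<Longrightarrow> m \<noteq> k \<Longrightarrow> Ef 0 m k = zs (m-1-k) @ os k @ [False]" by (auto simp add: Ef_def)
lemma Ef_even: "p \<noteq> 0 \<Longrightarrow> k \<noteq> 0 \<Longrightarrow> even k \<Longrightarrow> Ef p m k = zs (p*k-1) @ os (k-1) @ [False, True] @ zs (m - (p+1)*k)"
  by (simp add: Ef_def)
lemma Ef_odd_t1: "p \<noteq> 0 \<Longrightarrow> Ef p (p+1) 1 = zs p @ [True]" by (simp add: Ef_def)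
lemma Ef_odd_t: "p \<noteq> 0 \<Longrightarrow> odd k \<Longrightarrow> k \<noteq> 1 \<Longrightarrow> Ef p ((p+1)*k) k = zs (p*(k-1)-1) @ os (k-2) @ [False,True] @ zs p @ [True]"
  using odd_pos[of k] by (auto simp add: Ef_def)
lemma Ef_odd: "p \<noteq> 0 \<Longrightarrow> odd k \<Longrightarrow> m \<noteq> (p+1)*k \<Longrightarrow> Ef p m k = zs (m-1-k) @ os k @ [False]"
  by (auto simp add: Ef_def)

lemma os_Suc': "os (Suc n) = os n @ [True]" by (simp add: replicate_append_same)
lemma zs_Suc': "zs (Suc n) = zs n @ [False]" by (simp add: replicate_append_same)

lemma E1: assumes "0 < k" "Suc m = (p+1)*k" shows "Ef p (Suc m) k = Ef p m (k-1) @ [True]"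
proof -
  obtain k1 where k: "k = Suc k1" using assms(1) by (cases k) auto
  show ?thesis
  proof (cases "k1 = 0")
    case True
    then have m: "m = p" using assms k by simp
    show ?thesis
    proof (cases "p = 0")
      case True then show ?thesis using m k \<open>k1 = 0\<close> by (simp add: Ef_def)
    next
      case False then show ?thesis using m k \<open>k1 = 0\<close> Ef_odd_t1[of p] by (simp add: Ef_0)
    qed
  next
    case k1: False
    show ?thesis
    proof (cases "p = 0")
      case p: True
      then have m: "m = k1" using assms k by simp
      show ?thesis
      proof (cases "even k")
        case True
        then have "odd k1" using k by simp
        then show ?thesis using True m k p k1 Ef_p0_even[of k "Suc m"] Ef_p0_odd_t[of k1] by (simp add: replicate_append_same)
      next
        case False
        then have "even k1" using k by simp
        then show ?thesis using False m k p k1 Ef_p0_odd_t[of k] Ef_p0_even[of k1 m] by (simp add: replicate_append_same)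
      qed
    next
      case p: False
      show ?thesis
      proof (cases "even k")
        case True
        then have o: "odd k1" using k by simp
        have ne: "m \<noteq> (p+1)*k1" using assms k p by (simp add: algebra_simps)
        have e1: "m - 1 - k1 = p*k - 1" using assms k by (simp add: algebra_simps)
        have e2: "Suc m - (p+1)*k = 0" using assms by simp
        show ?thesis using Ef_even[OF p _ True, of "Suc m"] Ef_odd[OF p o ne] k e1 e2 by simp
      next
        case False
        then have o: "even k1" using k by simp
        have mm: "Suc m = (p+1)*k" by fact
        have e2: "m - (p+1)*k1 = p" using assms k by (simp add: algebra_simps)
        have "Ef p (Suc m) k = zs (p*(k-1)-1) @ os (k-2) @ [False,True] @ zs p @ [True]"
          using Ef_odd_t[OF p False] k k1 mm by simp
        moreover have "Ef p m k1 = zs (p*k1-1) @ os (k1-1) @ [False, True] @ zs p"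
          using Ef_even[OF p k1 o, of m] e2 by simp
        ultimately show ?thesis using k by simp
      qed
    qed
  qed
qed

lemma tw_G: assumes "p \<noteq> 0" "0 < k"
  shows "G p ((p+1)*k) k (zs (p*k-1) @ os (k-1) @ [False,True])"
proof -
  obtain k1 where k: "k = Suc k1" using assms by (cases k) auto
  have pk: "p*k = p*k1 + p" using k by simp
  define q where "q = p*k - 1"
  have le: "(p+1)*k1 \<le> q + k1" using pk assms(1) unfolding q_def by (simp add: algebra_simps)
  have g1: "G p (q + k1) k1 (omega (q+k1) k1)" by (rule G.om) (use le in simp)
  have g2: "G p (Suc (q + k1)) k1 (omega (q+k1) k1 @ [False])" by (rule G.z[OF g1]) (use le in simp)
  have e: "Suc (Suc (q + k1)) = (p+1)*(Suc k1)" using pk assms(1) unfolding q_def by (simp add: algebra_simps)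
  have g3: "G p (Suc (Suc (q + k1))) (Suc k1) ((omega (q+k1) k1 @ [False]) @ [True])" by (rule G.o[OF g2 e])
  have w: "(omega (q+k1) k1 @ [False]) @ [True] = zs q @ os k1 @ [False,True]" by (simp add: omega_def)
  have "G p ((p+1)*k) k (zs q @ os k1 @ [False,True])" using g3 unfolding e w k .
  then show ?thesis unfolding q_def k by simp
qed

lemma G_omega_zs: "(p+1)*k \<le> n \<Longrightarrow> n + c = N \<Longrightarrow> G p N k (omega n k @ zs c)"
  using G_zs[OF G.om] by blast

lemma F2: assumes "0 < k" "(p+1)*k \<le> m"
  shows "\<exists>a c. Ef p m k = a @ [True] @ zs c \<and> G p m (k-1) (a @ zs (Suc c))"
proof -
  obtain k1 where k: "k = Suc k1" using assms by (cases k) auto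
  have pk: "p*k = p*k1 + p" using k by simp
  have km: "k - 1 = k1" using k by simp
  have mk: "k \<le> m" "p*k1 + p + k1 + 1 \<le> m" using assms pk k by (auto simp: algebra_simps)
  show ?thesis
  proof (cases "p = 0")
    case p: True
    show ?thesis
    proof (cases "even k")
      case True
      have "Ef p m k = os k1 @ [True] @ zs (m-k)" using Ef_p0_even[OF _ True] p k by (simp add: replicate_append_same)
      moreover have "G p m k1 (os k1 @ zs (Suc (m-k)))"
        using G_omega_zs[of p k1 k1 "Suc (m-k)" m] p mk k by (simp add: omega_def)
      ultimately show ?thesis using k by auto
    next
      case odd: False
      show ?thesis
      proof (cases "m = k")
        case True
        have "Ef p m k = os k1 @ [True] @ zs 0" using Ef_p0_odd_t[OF odd] p k True by (simp add: replicate_append_same)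
        moreover have "G p m k1 (os k1 @ zs (Suc 0))"
          using G_omega_zs[of p k1 k1 "Suc 0" m] p mk k True by (simp add: omega_def)
        ultimately show ?thesis using k by (intro exI[of _ "os k1"] exI[of _ 0]) simp
      next
        case False
        have "Ef p m k = (zs (m-1-k) @ os k1) @ [True] @ zs 1" using Ef_p0_odd[OF odd False] p k by (simp add: replicate_append_same)
        moreover have "G p m k1 ((zs (m-1-k) @ os k1) @ zs (Suc 1))"
          using G_omega_zs[of p k1 "m-1-k+k1" 2 m] p mk k False by (simp add: omega_def numeral_2_eq_2)
        ultimately show ?thesis using k by (intro exI[of _ "zs (m-1-k) @ os k1"] exI[of _ 1]) simp
      qed
    qed
  next
    case p: False
    show ?thesis
    proof (cases "even k")
      case True
      define c where "c = m - (p+1)*k"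
      have "Ef p m k = (zs (p*k-1) @ os k1 @ [False]) @ [True] @ zs c"
        using Ef_even[OF p _ True, of m] k unfolding c_def by simp
      moreover have "G p m k1 ((zs (p*k-1) @ os k1 @ [False]) @ zs (Suc c))"
      proof -
        have "G p m k1 (omega (p*k-1+k1) k1 @ zs (Suc (Suc c)))"
          by (rule G_omega_zs) (use p pk mk assms(2) k in \<open>auto simp: c_def algebra_simps\<close>)
        then show ?thesis by (simp add: omega_def)
      qed
      ultimately show ?thesis unfolding km by blast
    next
      case odd: False
      show ?thesis
      proof (cases "m = (p+1)*k")
        case tight: True
        show ?thesis
        proof (cases "k1 = 0")
          case True
          have "Ef p m k = zs p @ [True] @ zs 0" using Ef_odd_t1[OF p] tight k True by simp
          moreover have "G p m k1 (zs p @ zs (Suc 0))" using G0 True tight k by (simp add: replicate_append_same)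
          ultimately show ?thesis unfolding km by blast
        next
          case False
          have "Ef p m k = (zs (p*(k-1)-1) @ os (k-2) @ [False,True] @ zs p) @ [True] @ zs 0"
            using Ef_odd_t[OF p odd] tight k False by simp
          moreover have "G p m k1 ((zs (p*k1-1) @ os (k1-1) @ [False,True]) @ zs (Suc p))"
          proof -
            have g: "G p ((p+1)*k1 + Suc p) k1 ((zs (p*k1-1) @ os (k1-1) @ [False,True]) @ zs (Suc p))"
              by (rule G_zs[OF tw_G[OF p]]) (use False in auto)
            moreover have "(p+1)*k1 + Suc p = m" using tight k by (simp add: algebra_simps)
            ultimately show ?thesis by simp
          qed
          ultimately show ?thesis using k by (intro exI[of _ "zs (p*(k-1)-1) @ os (k-2) @ [False,True] @ zs p"] exI[of _ 0]) (simp add: replicate_append_same)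
        qed
      next
        case False
        have "Ef p m k = (zs (m-1-k) @ os k1) @ [True] @ zs 1" using Ef_odd[OF p odd False] k by (simp add: replicate_append_same)
        moreover have "G p m k1 ((zs (m-1-k) @ os k1) @ zs (Suc 1))"
          using G_omega_zs[of p k1 "m-1-k+k1" 2 m] mk k False assms(2) by (simp add: omega_def algebra_simps numeral_2_eq_2)
        ultimately show ?thesis unfolding km by blast
      qed
    qed
  qed
qed

lemma upd_zs: "d < c \<Longrightarrow> (a @ zs c)[length a + d := True] = a @ zs d @ [True] @ zs (c - d - 1)"
proof -
  assume dc: "d < c"
  have c: "c = d + Suc (c - d - 1)" using dc by simp
  have "zs c = zs d @ False # zs (c - d - 1)" by (subst c) (simp only: replicate_add replicate_Suc)
  then show ?thesis by (simp add: list_update_append)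
qed

lemma omega_sorted: "sorted (omega m k)"
  by (auto simp: omega_def sorted_append)

lemma not_sorted_TF: "True \<in> set xs \<Longrightarrow> False \<in> set ys \<Longrightarrow> \<not> sorted (xs @ ys)"
  by (auto simp: sorted_append)

lemma E2: assumes "0 < k" "(p+1)*k \<le> m"
  shows "\<exists>a c. Ef p m (k-1) = a @ zs c \<and> (a = [] \<or> last a) \<and> max (length a) ((p+1)*k - 1) < length a + c \<and>
    G p m k ((a @ zs c)[max (length a) ((p+1)*k - 1) := True]) \<and>
    Ef p (Suc m) k = (if (a @ zs c)[max (length a) ((p+1)*k - 1) := True] = omega m k then Ef p m k else omega m k) @ [False]"
proof -
  obtain k1 where k: "k = Suc k1" using assms by (cases k) auto
  have km: "k - 1 = k1" using k by simp
  have pk: "p*k = p*k1 + p" using k by simp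
  have mk: "k \<le> m" "p*k1 + p + k1 + 1 \<le> m" using assms pk k by (auto simp: algebra_simps)
  show ?thesis
  proof (cases "k1 = 0")
    case k10: True
    have j0: "max (length ([]::bool list)) ((p+1)*k - 1) = p" using k k10 by simp
    have pm: "p < m" using mk k10 by simp
    have x: "(([]::bool list) @ zs m)[length ([]::bool list) + p := True] = zs p @ [True] @ zs (m - p - 1)"
      using upd_zs[of p m "[]"] pm by simp
    have gx: "G p m k (zs p @ [True] @ zs (m - p - 1))"
    proof -
      have "G p m 1 (omega (p+1) 1 @ zs (m-p-1))" by (rule G_omega_zs) (use pm in auto)
      then show ?thesis using k k10 by (simp add: omega_def)
    qed
    have lhs: "Ef p (Suc m) k = zs (m-1) @ [True, False]"
    proof (cases "p = 0")
      case True then show ?thesis using Ef_p0_odd[of 1 "Suc m"] k k10 pm by simp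
    next
      case False then show ?thesis using Ef_odd[OF False, of 1 "Suc m"] k k10 pm by simp
    qed
    have rhs: "(if zs p @ [True] @ zs (m - p - 1) = omega m k then Ef p m k else omega m k) @ [False] = zs (m-1) @ [True, False]"
    proof (cases "m = p + 1")
      case True
      have "Ef p m k = zs p @ [True]"
      proof (cases "p = 0")
        case p0: True then show ?thesis using Ef_p0_odd_t[of 1] True k k10 by simp
      next
        case False then show ?thesis using Ef_odd_t1[OF False] True k k10 by simp
      qed
      then show ?thesis using True k k10 by (simp add: omega_def)
    next
      case False
      have "zs p @ [True] @ zs (m - p - 1) \<noteq> omega m k"
      proof
        assume "zs p @ [True] @ zs (m - p - 1) = omega m k"
        then have "sorted ((zs p @ [True]) @ zs (m - p - 1))" using omega_sorted by (metis append_assoc)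
        moreover have "False \<in> set (zs (m - p - 1))" using False pm by simp
        ultimately show False using not_sorted_TF[of "zs p @ [True]" "zs (m-p-1)"] by simp
      qed
      then show ?thesis using k k10 by (simp add: omega_def)
    qed
    show ?thesis
      by (intro exI[of _ "[]"] exI[of _ m]) (use k10 k j0 x gx lhs rhs pm in \<open>simp add: Ef_0\<close>)
  next
    case k1: False
    show ?thesis
    proof (cases "even k")
      case True
      then have o: "odd k1" using k by simp
      have e': "Ef p m k1 = (zs (m-k) @ os k1) @ zs 1"
      proof (cases "p = 0")
        case True
        have "m \<noteq> k1" using mk k by simp
        then show ?thesis using Ef_p0_odd[OF o] True k by simp
      next
        case False
        have "m \<noteq> (p+1)*k1" using mk k False by (simp add: algebra_simps)
        then show ?thesis using Ef_odd[OF False o] k by simp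
      qed
      have la: "length (zs (m-k) @ os k1) = m - 1" using mk k by simp
      have j0: "max (m - 1) ((p+1)*k - 1) = m - 1" using assms by simp
      have x: "((zs (m-k) @ os k1) @ zs 1)[length (zs (m-k) @ os k1) + 0 := True] = omega m k"
        using upd_zs[of 0 1 "zs (m-k) @ os k1"] k by (simp add: omega_def replicate_append_same)
      have gx: "G p m k (omega m k)" by (rule G.om) (rule assms(2))
      have lhs: "Ef p (Suc m) k = Ef p m k @ [False]"
      proof (cases "p = 0")
        case p0: True
        have "m - k1 = Suc (m - Suc k1)" using mk k by simp
        then show ?thesis using Ef_p0_even[OF _ True] p0 k mk by (simp add: Suc_diff_le replicate_append_same)
      next
        case False
        have "Suc m - (p+1)*k = Suc (m - (p+1)*k)" using assms(2) by (simp add: Suc_diff_le)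
        then show ?thesis using Ef_even[OF False _ True] k by (simp add: replicate_append_same)
      qed
      show ?thesis
        by (intro exI[of _ "zs (m-k) @ os k1"] exI[of _ 1]) (use e' la j0 x gx lhs k1 k mk in \<open>auto simp: km\<close>)
    next
      case odd: False
      then have ev: "even k1" using k by simp
      show ?thesis
      proof (cases "p = 0")
        case p0: True
        have e': "Ef p m k1 = os k1 @ zs (m - k1)" using Ef_p0_even[OF k1 ev] p0 by simp
        have j0: "max (length (os k1)) ((p+1)*k - 1) = k1" using p0 k by simp
        have x: "(os k1 @ zs (m - k1))[length (os k1) + 0 := True] = os k @ zs (m-k)"
          using upd_zs[of 0 "m - k1" "os k1"] mk k by (simp add: replicate_append_same)
        have gx: "G p m k (os k @ zs (m-k))"
          using G_omega_zs[of p k k "m-k" m] p0 mk by (simp add: omega_def)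
        have lhs: "Ef p (Suc m) k = omega m k @ [False]"
          using Ef_p0_odd[OF odd, of "Suc m"] p0 mk k by (simp add: omega_def)
        have rhs: "(if os k @ zs (m-k) = omega m k then Ef p m k else omega m k) = omega m k"
        proof (cases "m = k")
          case True then show ?thesis using Ef_p0_odd_t[OF odd] p0 by (simp add: omega_def)
        next
          case False
          have "os k @ zs (m-k) \<noteq> omega m k"
          proof
            assume "os k @ zs (m-k) = omega m k"
            then have "sorted (os k @ zs (m-k))" using omega_sorted by metis
            moreover have "True \<in> set (os k)" "False \<in> set (zs (m-k))" using False mk k by auto
            ultimately show False using not_sorted_TF by blast
          qed
          then show ?thesis by simp
        qed
        show ?thesis
          by (intro exI[of _ "os k1"] exI[of _ "m - k1"]) (use e' j0 x gx lhs rhs k1 k mk in \<open>auto simp: km\<close>)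
      next
        case p: False
        define a where "a = zs (p*k1-1) @ os (k1-1) @ [False,True]"
        have pk1: "1 \<le> p*k1" using p k1 by simp
        have la: "length a = (p+1)*k1" using pk1 k1 unfolding a_def by (simp add: algebra_simps)
        have e': "Ef p m k1 = a @ zs (m - (p+1)*k1)" using Ef_even[OF p k1 ev] unfolding a_def by simp
        have j0: "max (length a) ((p+1)*k - 1) = length a + p" using la k by (simp add: algebra_simps)
        have x: "(a @ zs (m - (p+1)*k1))[length a + p := True] = a @ zs p @ [True] @ zs (m - (p+1)*k)"
          using upd_zs[of p "m - (p+1)*k1" a] mk k p by (simp add: algebra_simps)
        have gx: "G p m k (a @ zs p @ [True] @ zs (m - (p+1)*k))"
        proof -
          have g1: "G p ((p+1)*k1) k1 a" using tw_G[OF p] k1 unfolding a_def by simp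
          have g2: "G p ((p+1)*k1 + p) k1 (a @ zs p)" by (rule G_zs[OF g1]) simp
          have g3: "G p (Suc ((p+1)*k1 + p)) (Suc k1) ((a @ zs p) @ [True])" by (rule G.o[OF g2]) (simp add: algebra_simps)
          have g4: "G p (Suc ((p+1)*k1 + p) + (m - (p+1)*k)) (Suc k1) (((a @ zs p) @ [True]) @ zs (m - (p+1)*k))"
            by (rule G_zs[OF g3]) (simp add: algebra_simps)
          moreover have "Suc ((p+1)*k1 + p) + (m - (p+1)*k) = m" using assms(2) k by (simp add: algebra_simps)
          ultimately show ?thesis using k by simp
        qed
        have ne: "a @ zs p @ [True] @ zs (m - (p+1)*k) \<noteq> omega m k"
        proof
          assume "a @ zs p @ [True] @ zs (m - (p+1)*k) = omega m k"
          then have "sorted (a @ (zs p @ [True] @ zs (m - (p+1)*k)))" using omega_sorted by metis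
          moreover have "True \<in> set a" unfolding a_def by simp
          moreover have "False \<in> set (zs p @ [True] @ zs (m - (p+1)*k))" using p by simp
          ultimately show False using not_sorted_TF by blast
        qed
        have lhs: "Ef p (Suc m) k = omega m k @ [False]"
        proof -
          have "Suc m \<noteq> (p+1)*k" using mk k by (simp add: algebra_simps)
          then show ?thesis using Ef_odd[OF p odd] mk by (simp add: omega_def)
        qed
        have X: "(a @ zs (m - (p+1)*k1))[max (length a) ((p+1)*k - 1) := True] = a @ zs p @ [True] @ zs (m - (p+1)*k)"
          using j0 x by simp
        show ?thesis
        proof (intro exI[of _ a] exI[of _ "m - (p+1)*k1"] conjI)
          show "Ef p m (k-1) = a @ zs (m-(p+1)*k1)" using e' km by simp
          show "a = [] \<or> last a" unfolding a_def by simp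
          show "max (length a) ((p+1)*k - 1) < length a + (m - (p+1)*k1)" using j0 la mk k by (simp add: algebra_simps)
          show "G p m k ((a @ zs (m - (p+1)*k1))[max (length a) ((p+1)*k - 1) := True])" unfolding X by (rule gx)
          show "Ef p (Suc m) k = (if (a @ zs (m - (p+1)*k1))[max (length a) ((p+1)*k - 1) := True] = omega m k then Ef p m k else omega m k) @ [False]"
            unfolding X using ne lhs by simp
        qed
      qed
    qed
  qed
qed

lemma half1_move_gen:
  assumes N: "gn {u. u@[True] \<in> Cw (Suc m) p k} {u. u@[True] \<in> V} (a @ zs c) = None"
    and len: "length (a @ zs c) = m"
    and al: "a = [] \<or> last a"
    and j0: "j0 = max (length a) ((p+1)*k - 1)" "j0 < length a + c"
    and xC: "(a @ zs c)[j0 := True] \<in> Cw m p k"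
    and V: "\<forall>u. u@[False] \<notin> V"
  shows "gn (Cw (Suc m) p k) V ((a @ zs c)@[True]) = Some ((a @ zs c)[j0:=True] @ [False])"
proof (rule half1_move[OF N])
  let ?w = "a @ zs c"
  have zc: "\<And>i. length a \<le> i \<Longrightarrow> i < length ?w \<Longrightarrow> \<not> ?w ! i" by (auto simp: nth_append)
  show "j0 < length ?w" using j0 by simp
  show "homog_transp (?w @ [True]) (length ?w) j0"
    unfolding homog_transp_def using j0 zc by (auto simp: nth_append)
  show "?w[j0 := True] @ [False] \<in> Cw (Suc m) p k" using xC by (simp add: Cw_snocF)
  show "?w[j0 := True] @ [False] \<notin> V" using V by simp
  fix j assume jj: "j < j0" and h: "homog_transp (?w @ [True]) (length ?w) j"
  have nj: "\<not> ?w ! j" and nb: "\<And>i. j < i \<Longrightarrow> i < length ?w \<Longrightarrow> \<not> ?w ! i"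
    using h unfolding homog_transp_def by (auto simp: nth_append split: if_splits)
  have jl: "j < length ?w" using h unfolding homog_transp_def by (auto simp: nth_append split: if_splits)
  show "?w[j := True] @ [False] \<notin> Cw (Suc m) p k \<or> ?w[j := True] @ [False] \<in> V"
  proof (cases "j < length a")
    case True
    then have an: "a \<noteq> []" by auto
    then have la: "?w ! (length a - 1)" using al by (simp add: nth_append last_conv_nth)
    show ?thesis
    proof (cases "j = length a - 1")
      case True then show ?thesis using la nj by simp
    next
      case False then show ?thesis using nb[of "length a - 1"] la \<open>j < length a\<close> by simp
    qed
  next
    case False
    define d where "d = j - length a"
    have dc: "d < c" using jl False unfolding d_def by simp
    have jd: "j = length a + d" using False unfolding d_def by simp
    have upd: "?w[j := True] = (a @ zs d) @ [True] @ zs (c - d - 1)" using upd_zs[OF dc, of a] jd by simp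
    have "j0 \<noteq> length a" using jj False by simp
    then have "j0 = (p+1)*k - 1" using j0 by (simp add: max_def split: if_splits)
    then have "\<not> (p+1)*k \<le> Suc (length (a @ zs d))" using jj jd by simp
    then have "?w[j := True] \<notin> Cw m p k" using last_one_pos upd by metis
    then show ?thesis by (simp add: Cw_snocF)
  qed
qed

lemma cover_iff:
  assumes "\<And>u. u@[False] \<in> S \<longleftrightarrow> u \<in> A" "\<And>u. u@[True] \<in> S \<longleftrightarrow> u \<in> B" "\<And>w. w \<in> S \<Longrightarrow> w \<noteq> []"
  shows "S \<subseteq> (\<lambda>u. u@[False]) ` X \<union> (\<lambda>u. u@[True]) ` Y \<longleftrightarrow> A \<subseteq> X \<and> B \<subseteq> Y"
proof
  assume a: "S \<subseteq> (\<lambda>u. u@[False]) ` X \<union> (\<lambda>u. u@[True]) ` Y"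
  show "A \<subseteq> X \<and> B \<subseteq> Y"
  proof
    show "A \<subseteq> X"
    proof
      fix u assume "u \<in> A" then have "u@[False] \<in> S" using assms(1) by simp
      then show "u \<in> X" using a by auto
    qed
    show "B \<subseteq> Y"
    proof
      fix u assume "u \<in> B" then have "u@[True] \<in> S" using assms(2) by simp
      then show "u \<in> Y" using a by auto
    qed
  qed
next
  assume a: "A \<subseteq> X \<and> B \<subseteq> Y"
  show "S \<subseteq> (\<lambda>u. u@[False]) ` X \<union> (\<lambda>u. u@[True]) ` Y"
  proof
    fix w assume w: "w \<in> S"
    then obtain v b where vb: "w = v @ [b]" using assms(3) by (metis rev_exhaust)
    show "w \<in> (\<lambda>u. u@[False]) ` X \<union> (\<lambda>u. u@[True]) ` Y"
      using w vb a assms(1,2) by (cases b) auto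
  qed
qed

lemma Cw_nonempty: "w \<in> Cw (Suc m) p k \<Longrightarrow> w \<noteq> []"
  by (auto simp: Cw_def)

lemma main0: assumes "\<alpha> \<in> Cw n p 0"
  shows "(Cw n p 0 \<subseteq> set (greedy (Cw n p 0) \<alpha>) \<longleftrightarrow> G p n 0 \<alpha>) \<and>
         last (greedy (Cw n p 0) \<alpha>) = (if \<alpha> = omega n 0 then Ef p n 0 else omega n 0)"
proof -
  have a: "\<alpha> = zs n" using assms Cw0 by blast
  have "greedy_next (Cw n p 0) [\<alpha>] = None"
    unfolding greedy_next_gn gn_None cands_def using Cw0 a by auto
  then have "Run (Cw n p 0) [\<alpha>] [\<alpha>]" by (rule Run.stop)
  then have "greedy (Cw n p 0) \<alpha> = [\<alpha>]" using greedy_eq finite_Cw assms by blast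
  then show ?thesis using a Cw0 G0 by (simp add: omega_def Ef_0)
qed

definition IHm :: "nat \<Rightarrow> nat \<Rightarrow> bool" where
  "IHm p m \<longleftrightarrow> (\<forall>k' \<gamma>. \<gamma> \<in> Cw m p k' \<longrightarrow> (Cw m p k' \<subseteq> set (greedy (Cw m p k') \<gamma>) \<longleftrightarrow> G p m k' \<gamma>) \<and>
      last (greedy (Cw m p k') \<gamma>) = (if \<gamma> = omega m k' then Ef p m k' else omega m k'))"

lemma IHmD: "IHm p m \<Longrightarrow> \<gamma> \<in> Cw m p k' \<Longrightarrow> (Cw m p k' \<subseteq> set (greedy (Cw m p k') \<gamma>) \<longleftrightarrow> G p m k' \<gamma>)"
  "IHm p m \<Longrightarrow> \<gamma> \<in> Cw m p k' \<Longrightarrow> last (greedy (Cw m p k') \<gamma>) = (if \<gamma> = omega m k' then Ef p m k' else omega m k')"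
  unfolding IHm_def by blast+

lemma halfF: "{u. u@[False] \<in> Cw (Suc m) p k} = Cw m p k"
  by (auto simp: Cw_snocF)
lemma halfT: "0 < k \<Longrightarrow> (p+1)*k \<le> Suc m \<Longrightarrow> {u. u@[True] \<in> Cw (Suc m) p k} = Cw m p (k-1)"
  by (auto simp: Cw_snocT')

lemma Run_nonempty_last: "Run S [\<alpha>] R \<Longrightarrow> set [\<alpha>] \<subseteq> S \<Longrightarrow> R \<noteq> [] \<and> last R \<in> S"
  using Run_last Run_subset by (metis last_in_set list.distinct(1) subsetD)

lemma stepF:
  assumes IH: "IHm p m" and k: "0 < k" and \<beta>: "\<beta> \<in> Cw m p k"
  shows "(Cw (Suc m) p k \<subseteq> set (greedy (Cw (Suc m) p k) (\<beta>@[False])) \<longleftrightarrow> G p (Suc m) k (\<beta>@[False])) \<and>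
         last (greedy (Cw (Suc m) p k) (\<beta>@[False])) = (if \<beta>@[False] = omega (Suc m) k then Ef p (Suc m) k else omega (Suc m) k)"
proof -
  let ?S = "Cw (Suc m) p k" and ?A = "Cw m p k" and ?B = "Cw m p (k-1)"
  have km: "(p+1)*k \<le> m" using \<beta> Cw_bound by blast
  have km': "(p+1)*k \<le> Suc m" using km by simp
  have hF: "{u. u@[False] \<in> ?S} = ?A" by (rule halfF)
  have hT: "{u. u@[True] \<in> ?S} = ?B" by (rule halfT[OF k km'])
  define R0 where "R0 = greedy ?A \<beta>"
  have run0: "Run ?A [\<beta>] R0" unfolding R0_def by (rule greedy_Run[OF finite_Cw \<beta>])
  have R0ne: "R0 \<noteq> []" "last R0 \<in> ?A" using Run_nonempty_last[OF run0] \<beta> by auto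
  have IH0: "?A \<subseteq> set R0 \<longleftrightarrow> G p m k \<beta>" using IHmD(1)[OF IH \<beta>] unfolding R0_def .
  have last0: "last R0 = (if \<beta> = omega m k then Ef p m k else omega m k)" using IHmD(2)[OF IH \<beta>] unfolding R0_def .
  obtain a c where e0: "last R0 = a @ [True] @ zs c" and gu: "G p m k \<beta> \<longrightarrow> G p m (k-1) (a @ zs (Suc c))"
  proof (cases "\<beta> = omega m k")
    case True
    then obtain a c where "Ef p m k = a @ [True] @ zs c \<and> G p m (k-1) (a @ zs (Suc c))" using F2[OF k km] by blast
    then show ?thesis using that last0 True by auto
  next
    case False
    obtain k1 where k1: "k = Suc k1" using k by (cases k) auto
    have "last R0 = (zs (m-k) @ os (k-1)) @ [True] @ zs 0" using last0 False k1 by (simp add: omega_def replicate_append_same)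
    moreover have "G p m (k-1) ((zs (m-k) @ os (k-1)) @ zs (Suc 0))"
    proof -
      have "G p (m - 1 + 1) (k-1) (omega (m-1) (k-1) @ zs 1)"
        by (rule G_omega_zs) (use km k in \<open>auto simp: algebra_simps\<close>)
      moreover have "m - 1 + 1 = m" "m - 1 - (k-1) = m - k" using km k by (auto simp: algebra_simps)
      ultimately show ?thesis by (simp add: omega_def)
    qed
    ultimately show ?thesis using that by blast
  qed
  define u where "u = a @ zs (Suc c)"
  have uB: "u \<in> ?B" unfolding u_def using move_right_C R0ne(2) e0 by metis
  have uF: "last u = False" unfolding u_def by simp
  define R1 where "R1 = greedy ?B u"
  have run1: "Run ?B [u] R1" unfolding R1_def by (rule greedy_Run[OF finite_Cw uB])
  have IH1: "?B \<subseteq> set R1 \<longleftrightarrow> G p m (k-1) u" using IHmD(1)[OF IH uB] unfolding R1_def .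
  have last1: "last R1 = omega m (k-1)"
  proof (cases "u = omega m (k-1)")
    case True
    then have "k - 1 = 0" using uF by (cases "k-1") (auto simp: omega_def)
    then show ?thesis using IHmD(2)[OF IH uB] unfolding R1_def by (simp add: Ef_0 omega_def)
  next
    case False then show ?thesis using IHmD(2)[OF IH uB] unfolding R1_def by simp
  qed
  define Q where "Q = map (\<lambda>u. u@[False]) R0 @ map (\<lambda>u. u@[True]) R1"
  have fin1: "gn {u. u@[True] \<in> ?S} {u. u@[True] \<in> set Q} (last R1) = None" "last Q = last R1 @ [True]"
  proof -
    have run1S: "Run {u. u@[True] \<in> ?S} [u] R1" using run1 hT by simp
    have pre: "\<forall>u. u@[True] \<notin> set (map (\<lambda>u. u@[False]) R0)" by auto
    show "gn {u. u@[True] \<in> ?S} {u. u@[True] \<in> set Q} (last R1) = None" "last Q = last R1 @ [True]"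
      using lift_final[OF run1S pre] unfolding Q_def by blast+
  qed
  have stopQ: "greedy_next ?S Q = None"
    unfolding greedy_next_gn fin1(2)
  proof (rule half1_stop[OF fin1(1)])
    fix j assume j: "j < length (last R1)" and h: "homog_transp (last R1 @ [True]) (length (last R1)) j"
    show "(last R1)[j := True] @ [False] \<notin> ?S \<or> (last R1)[j := True] @ [False] \<in> set Q"
    proof (cases "k = 1")
      case False
      then have "last R1 \<noteq> []" "last (last R1)" using last1 k km by (auto simp: omega_def)
      then show ?thesis using homog1_lastT h by blast
    next
      case True
      then have "G p m k \<beta>" using G_C1 \<beta> by simp
      then have "?A \<subseteq> set R0" using IH0 by simp
      then show ?thesis unfolding Q_def by (auto simp: Cw_snocF)
    qed
  qed
  have runQ: "Run ?S Q Q" by (rule Run.stop[OF stopQ])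
  have step1: "greedy_next ?S (map (\<lambda>u. u@[False]) R0) = Some (u @ [True])"
  proof -
    have fin0: "gn {u. u@[False] \<in> ?S} {u. u@[False] \<in> set ([] @ map (\<lambda>u. u@[False]) R0)} (last R0) = None"
         "last ([] @ map (\<lambda>u. u@[False]) R0) = last R0 @ [False]"
    proof -
      have run0S: "Run {u. u@[False] \<in> ?S} [\<beta>] R0" using run0 hF by simp
      have pre: "\<forall>u. u@[False] \<notin> set ([]::bool list list)" by auto
      show "gn {u. u@[False] \<in> ?S} {u. u@[False] \<in> set ([] @ map (\<lambda>u. u@[False]) R0)} (last R0) = None"
         "last ([] @ map (\<lambda>u. u@[False]) R0) = last R0 @ [False]"
        using lift_final[OF run0S pre] by blast+
    qed
    have "gn ?S (set (map (\<lambda>u. u@[False]) R0)) (last R0 @ [False]) = Some (u @ [True])"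
      unfolding u_def
    proof (rule half0_move)
      show "gn {u. u @ [False] \<in> ?S} {u. u @ [False] \<in> set (map (\<lambda>u. u @ [False]) R0)} (last R0) = None" using fin0 by simp
      show "last R0 = a @ [True] @ zs c" by (rule e0)
      have uS: "u@[True] \<in> ?S" using Cw_snocT'[OF k, of u m p] uB km' by blast
      show "(a @ zs (Suc c)) @ [True] \<in> ?S" using uS unfolding u_def .
      show "(a @ zs (Suc c)) @ [True] \<notin> set (map (\<lambda>u. u @ [False]) R0)" by auto
    qed
    then show ?thesis using fin0(2) by (simp add: greedy_next_gn)
  qed
  have "Run ?S ([] @ [u@[True]]) Q" if "Run ?S ([] @ map (\<lambda>u. u@[True]) R1) Q" for Q
    by (rule lift_phase[of True ?S u R1 "[]"]) (use run1 hT that in auto)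
  have runQ2: "Run ?S (map (\<lambda>u. u@[False]) R0 @ [u@[True]]) Q"
    by (rule lift_phase[of True ?S u R1]) (use run1 hT runQ in \<open>auto simp: Q_def\<close>)
  have runQ3: "Run ?S (map (\<lambda>u. u@[False]) R0) Q" by (rule Run.step[OF step1 runQ2])
  have runQ4: "Run ?S ([] @ [\<beta>@[False]]) Q"
    by (rule lift_phase[of False ?S \<beta> R0 "[]"]) (use run0 hF runQ3 in auto)
  have gQ: "greedy ?S (\<beta>@[False]) = Q"
    by (rule greedy_eq[OF finite_Cw]) (use \<beta> runQ4 in \<open>auto simp: Cw_snocF\<close>)
  have setQ: "set Q = (\<lambda>u. u@[False]) ` set R0 \<union> (\<lambda>u. u@[True]) ` set R1" unfolding Q_def by auto
  have cov: "?S \<subseteq> set Q \<longleftrightarrow> ?A \<subseteq> set R0 \<and> ?B \<subseteq> set R1"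
    unfolding setQ by (rule cover_iff) (use hF hT Cw_nonempty in auto)
  have "?S \<subseteq> set Q \<longleftrightarrow> G p (Suc m) k (\<beta>@[False])"
    unfolding cov IH0 IH1 G_inv0[OF k] using gu u_def km by auto
  moreover have "last Q = omega (Suc m) k"
    using fin1(2) last1 omega_snocT[of "k-1" m] k km by (simp add: algebra_simps)
  moreover have "\<beta>@[False] \<noteq> omega (Suc m) k" using omega_not_F[OF k] by metis
  ultimately show ?thesis using gQ by simp
qed

lemma stepT:
  assumes IH: "IHm p m" and k: "0 < k" and \<alpha>: "\<beta>@[True] \<in> Cw (Suc m) p k"
  shows "(Cw (Suc m) p k \<subseteq> set (greedy (Cw (Suc m) p k) (\<beta>@[True])) \<longleftrightarrow> G p (Suc m) k (\<beta>@[True])) \<and>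
         last (greedy (Cw (Suc m) p k) (\<beta>@[True])) = (if \<beta>@[True] = omega (Suc m) k then Ef p (Suc m) k else omega (Suc m) k)"
proof -
  let ?S = "Cw (Suc m) p k" and ?A = "Cw m p k" and ?B = "Cw m p (k-1)"
  have \<beta>: "\<beta> \<in> ?B" and km': "(p+1)*k \<le> Suc m" using \<alpha> Cw_snocT'[OF k] by auto
  have hF: "{u. u@[False] \<in> ?S} = ?A" by (rule halfF)
  have hT: "{u. u@[True] \<in> ?S} = ?B" by (rule halfT[OF k km'])
  have om: "omega (Suc m) k = omega m (k-1) @ [True]"
    using omega_snocT[of "k-1" m] k km' by (simp add: algebra_simps)
  define R1 where "R1 = greedy ?B \<beta>"
  have run1: "Run ?B [\<beta>] R1" unfolding R1_def by (rule greedy_Run[OF finite_Cw \<beta>])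
  have R1ne: "R1 \<noteq> []" "last R1 \<in> ?B" using Run_nonempty_last[OF run1] \<beta> by auto
  have IH1: "?B \<subseteq> set R1 \<longleftrightarrow> G p m (k-1) \<beta>" using IHmD(1)[OF IH \<beta>] unfolding R1_def .
  have last1: "last R1 = (if \<beta> = omega m (k-1) then Ef p m (k-1) else omega m (k-1))"
    using IHmD(2)[OF IH \<beta>] unfolding R1_def .
  have run1S: "Run {u. u@[True] \<in> ?S} [\<beta>] R1" using run1 hT by simp
  have fin1: "gn {u. u@[True] \<in> ?S} {u. u@[True] \<in> set ([] @ map (\<lambda>u. u@[True]) R1)} (last R1) = None"
     "last ([] @ map (\<lambda>u. u@[True]) R1) = last R1 @ [True]"
    using lift_final[OF run1S, of "[]"] by simp_all
  have setA: "?A = {} \<longleftrightarrow> \<not> (p+1)*k \<le> m"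
  proof
    assume "?A = {}" then show "\<not> (p+1)*k \<le> m" using omega_C[of p k m] by auto
  next
    assume "\<not> (p+1)*k \<le> m" then show "?A = {}" using Cw_bound by blast
  qed
  have G1: "G p (Suc m) k (\<beta>@[True]) \<longleftrightarrow> \<beta> = omega m (k-1) \<or> (Suc m = (p+1)*k \<and> G p m (k-1) \<beta>)"
    unfolding G_inv1[OF k] om using km' by auto
  show ?thesis
  proof (cases "\<beta> = omega m (k-1)")
    case False
    then have k1: "k - 1 \<noteq> 0" using \<beta> Cw0 by (auto simp: omega_def)
    have l1: "last R1 = omega m (k-1)" using last1 False by simp
    define Q where "Q = map (\<lambda>u. u@[True]) R1"
    have stopQ: "greedy_next ?S Q = None"
      unfolding greedy_next_gn
    proof -
      have "gn ?S (set Q) (last R1 @ [True]) = None"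
      proof (rule half1_stop)
        show "gn {u. u@[True] \<in> ?S} {u. u@[True] \<in> set Q} (last R1) = None" using fin1 unfolding Q_def by simp
        fix j assume "j < length (last R1)" "homog_transp (last R1 @ [True]) (length (last R1)) j"
        moreover have "last R1 \<noteq> []" "last (last R1)" using l1 k1 by (auto simp: omega_def)
        ultimately show "(last R1)[j := True] @ [False] \<notin> ?S \<or> (last R1)[j := True] @ [False] \<in> set Q"
          using homog1_lastT by blast
      qed
      then show "gn ?S (set Q) (last Q) = None" using fin1(2) unfolding Q_def by simp
    qed
    have runQ: "Run ?S ([] @ [\<beta>@[True]]) Q"
      by (rule lift_phase[of True ?S \<beta> R1 "[]"]) (use run1S Run.stop[OF stopQ] in \<open>auto simp: Q_def\<close>)
    have gQ: "greedy ?S (\<beta>@[True]) = Q"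
      by (rule greedy_eq[OF finite_Cw]) (use \<alpha> runQ in auto)
    have setQ: "set Q = (\<lambda>u. u@[False]) ` {} \<union> (\<lambda>u. u@[True]) ` set R1" unfolding Q_def by auto
    have cov: "?S \<subseteq> set Q \<longleftrightarrow> ?A \<subseteq> {} \<and> ?B \<subseteq> set R1"
      unfolding setQ by (rule cover_iff) (use hF hT Cw_nonempty in auto)
    have "?S \<subseteq> set Q \<longleftrightarrow> G p (Suc m) k (\<beta>@[True])"
      unfolding cov IH1 G1 using setA False km' by auto
    moreover have "last Q = omega (Suc m) k" using fin1(2) l1 om unfolding Q_def by simp
    moreover have "\<beta>@[True] \<noteq> omega (Suc m) k" using om False by simp
    ultimately show ?thesis using gQ by simp
  next
    case True
    have cov1: "?B \<subseteq> set R1" using IH1 True G.om[of p "k-1" m] \<beta> Cw_bound by blast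
    have l1: "last R1 = Ef p m (k-1)" using last1 True by simp
    have aom: "\<beta>@[True] = omega (Suc m) k" using om True by simp
    show ?thesis
    proof (cases "(p+1)*k \<le> m")
      case False
      then have A0: "?A = {}" using setA by simp
      have tight: "Suc m = (p+1)*k" using False km' by simp
      define Q where "Q = map (\<lambda>u. u@[True]) R1"
      have stopQ: "greedy_next ?S Q = None"
        unfolding greedy_next_gn
      proof -
        have "gn ?S (set Q) (last R1 @ [True]) = None"
        proof (rule half1_stop)
          show "gn {u. u@[True] \<in> ?S} {u. u@[True] \<in> set Q} (last R1) = None" using fin1 unfolding Q_def by simp
          fix j
          show "(last R1)[j := True] @ [False] \<notin> ?S \<or> (last R1)[j := True] @ [False] \<in> set Q"
            using A0 by (simp add: Cw_snocF)
        qed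
        then show "gn ?S (set Q) (last Q) = None" using fin1(2) unfolding Q_def by simp
      qed
      have runQ: "Run ?S ([] @ [\<beta>@[True]]) Q"
        by (rule lift_phase[of True ?S \<beta> R1 "[]"]) (use run1S Run.stop[OF stopQ] in \<open>auto simp: Q_def\<close>)
      have gQ: "greedy ?S (\<beta>@[True]) = Q"
        by (rule greedy_eq[OF finite_Cw]) (use \<alpha> runQ in auto)
      have setQ: "set Q = (\<lambda>u. u@[False]) ` {} \<union> (\<lambda>u. u@[True]) ` set R1" unfolding Q_def by auto
      have cov: "?S \<subseteq> set Q \<longleftrightarrow> ?A \<subseteq> {} \<and> ?B \<subseteq> set R1"
        unfolding setQ by (rule cover_iff) (use hF hT Cw_nonempty in auto)
      have "?S \<subseteq> set Q" using cov A0 cov1 by simp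
      moreover have "G p (Suc m) k (\<beta>@[True])" using G1 True by simp
      moreover have "last Q = Ef p (Suc m) k" using fin1(2) l1 E1[OF k tight] unfolding Q_def by simp
      ultimately show ?thesis using gQ aom by simp
    next
      case nt: True
      obtain a c where e': "Ef p m (k-1) = a @ zs c" and al: "a = [] \<or> last a"
        and j0: "max (length a) ((p+1)*k - 1) < length a + c"
        and gx: "G p m k ((a @ zs c)[max (length a) ((p+1)*k - 1) := True])"
        and Ex: "Ef p (Suc m) k = (if (a @ zs c)[max (length a) ((p+1)*k - 1) := True] = omega m k then Ef p m k else omega m k) @ [False]"
        using E2[OF k nt] by blast
      define j where "j = max (length a) ((p+1)*k - 1)"
      define x where "x = (a @ zs c)[j := True]"
      have xA: "x \<in> ?A" using G_C gx unfolding x_def j_def by blast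
      define R0 where "R0 = greedy ?A x"
      have run0: "Run ?A [x] R0" unfolding R0_def by (rule greedy_Run[OF finite_Cw xA])
      have cov0: "?A \<subseteq> set R0" using IHmD(1)[OF IH xA] gx unfolding R0_def x_def j_def by simp
      have last0: "last R0 = (if x = omega m k then Ef p m k else omega m k)"
        using IHmD(2)[OF IH xA] unfolding R0_def .
      have run0S: "Run {u. u@[False] \<in> ?S} [x] R0" using run0 hF by simp
      define Q where "Q = map (\<lambda>u. u@[True]) R1 @ map (\<lambda>u. u@[False]) R0"
      have pre0: "\<forall>u. u@[False] \<notin> set (map (\<lambda>u. u@[True]) R1)" by auto
      have fin0: "gn {u. u@[False] \<in> ?S} {u. u@[False] \<in> set Q} (last R0) = None" "last Q = last R0 @ [False]"
        using lift_final[OF run0S pre0] unfolding Q_def by blast+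
      have stopQ: "greedy_next ?S Q = None"
        unfolding greedy_next_gn fin0(2)
      proof (rule half0_stop[OF fin0(1)])
        fix v assume "v @ [True] \<in> ?S"
        then have "v \<in> ?B" using hT by auto
        then show "v @ [True] \<in> set Q" using cov1 unfolding Q_def by auto
      qed
      have runQ1: "Run ?S (map (\<lambda>u. u@[True]) R1 @ [x@[False]]) Q"
        by (rule lift_phase[OF run0S pre0]) (use Run.stop[OF stopQ] in \<open>simp add: Q_def\<close>)
      have step1: "greedy_next ?S (map (\<lambda>u. u@[True]) R1) = Some (x @ [False])"
      proof -
        have lenm: "length (a @ zs c) = m" using R1ne(2) l1 e' by (simp add: Cw_def)
        have "gn ?S (set (map (\<lambda>u. u@[True]) R1)) ((a @ zs c) @ [True]) = Some (x @ [False])"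
          unfolding x_def
        proof (rule half1_move_gen)
          show "gn {u. u@[True] \<in> ?S} {u. u@[True] \<in> set (map (\<lambda>u. u@[True]) R1)} (a @ zs c) = None"
            using fin1(1) l1 e' by simp
        qed (use lenm al j0 gx G_C j_def in auto)
        then show ?thesis using fin1(2) l1 e' by (simp add: greedy_next_gn)
      qed
      have runQ2: "Run ?S (map (\<lambda>u. u@[True]) R1) Q" by (rule Run.step[OF step1 runQ1])
      have runQ: "Run ?S ([] @ [\<beta>@[True]]) Q"
        by (rule lift_phase[of True ?S \<beta> R1 "[]"]) (use run1S runQ2 in auto)
      have gQ: "greedy ?S (\<beta>@[True]) = Q"
        by (rule greedy_eq[OF finite_Cw]) (use \<alpha> runQ in auto)
      have setQ: "set Q = (\<lambda>u. u@[False]) ` set R0 \<union> (\<lambda>u. u@[True]) ` set R1" unfolding Q_def by auto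
      have cov: "?S \<subseteq> set Q \<longleftrightarrow> ?A \<subseteq> set R0 \<and> ?B \<subseteq> set R1"
        unfolding setQ by (rule cover_iff) (use hF hT Cw_nonempty in auto)
      have "?S \<subseteq> set Q" using cov cov0 cov1 by simp
      moreover have "G p (Suc m) k (\<beta>@[True])" using G1 True by simp
      moreover have "last Q = Ef p (Suc m) k" using fin0(2) last0 Ex unfolding x_def j_def by simp
      ultimately show ?thesis using gQ aom by simp
    qed
  qed
qed

lemma main: "\<alpha> \<in> Cw n p k \<Longrightarrow> (Cw n p k \<subseteq> set (greedy (Cw n p k) \<alpha>) \<longleftrightarrow> G p n k \<alpha>) \<and>
    last (greedy (Cw n p k) \<alpha>) = (if \<alpha> = omega n k then Ef p n k else omega n k)"
proof (induction n arbitrary: k \<alpha>)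
  case 0
  then have "k = 0" using Cw_bound by fastforce
  then show ?case using main0 0 by blast
next
  case (Suc m)
  have IH: "IHm p m" unfolding IHm_def using Suc.IH by blast
  show ?case
  proof (cases "k = 0")
    case True then show ?thesis using main0 Suc.prems by blast
  next
    case False
    then have k: "0 < k" by simp
    obtain \<beta> b where ab: "\<alpha> = \<beta> @ [b]" using Cw_nonempty[OF Suc.prems] by (metis rev_exhaust)
    show ?thesis
    proof (cases b)
      case True then show ?thesis using stepT[OF IH k] Suc.prems ab by simp
    next
      case False
      then have "\<beta> \<in> Cw m p k" using Suc.prems ab by (simp add: Cw_snocF)
      then show ?thesis using stepF[OF IH k] ab False by simp
    qed
  qed
qed

lemma Gen_eq: "Gen p n k = {w. G p n k w}"
  unfolding Gen_def Dp_def using main G_C by blast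

definition U1 :: "nat \<Rightarrow> nat \<Rightarrow> nat \<Rightarrow> bool list set" where
  "U1 p n k = (\<Union>j\<in>{1..k}. {zs (p * j - i) @ os (j - 1) @ zs i @ [True]
                                @ concat (replicate (k - j) (zs p @ [True]))
                                @ zs (n - (p + 1) * k) | i. i \<le> p - 1})"
definition U2 :: "nat \<Rightarrow> nat \<Rightarrow> nat \<Rightarrow> bool list set" where
  "U2 p n k = {zs i @ os k @ zs (n - i - k) | i. p * k + 1 \<le> i \<and> i \<le> n - k}"

lemma U1I: "1 \<le> j \<Longrightarrow> j \<le> k \<Longrightarrow> i \<le> p - 1 \<Longrightarrow>
  w = zs (p * j - i) @ os (j - 1) @ zs i @ [True] @ concat (replicate (k - j) (zs p @ [True])) @ zs (n - (p + 1) * k)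
  \<Longrightarrow> w \<in> U1 p n k"
  unfolding U1_def by (intro UN_I[of j] CollectI exI[of _ i] conjI) auto

lemma U2I: "p * k + 1 \<le> i \<Longrightarrow> i \<le> n - k \<Longrightarrow> w = zs i @ os k @ zs (n - i - k) \<Longrightarrow> w \<in> U2 p n k"
  unfolding U2_def by (intro CollectI exI[of _ i] conjI) auto

lemma U1E: assumes "w \<in> U1 p n k"
  obtains j i where "1 \<le> j" "j \<le> k" "i \<le> p - 1"
    "w = zs (p * j - i) @ os (j - 1) @ zs i @ [True] @ concat (replicate (k - j) (zs p @ [True])) @ zs (n - (p + 1) * k)"
  using assms unfolding U1_def by auto

lemma U2E: assumes "w \<in> U2 p n k"
  obtains i where "p * k + 1 \<le> i" "i \<le> n - k" "w = zs i @ os k @ zs (n - i - k)"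
  using assms unfolding U2_def by auto

lemma concat_rep_snoc: "concat (replicate (Suc t) B) = concat (replicate t B) @ B"
  by (induct t) auto

lemma G_CL: "G p n k w \<Longrightarrow> w \<in> (if k = 0 then {zs n} else U1 p n k \<union> U2 p n k)"
proof (induction rule: G.induct)
  case (om k n)
  show ?case
  proof (cases "k = 0")
    case True then show ?thesis by (simp add: omega_def)
  next
    case False
    show ?thesis
    proof (cases "p*k + 1 \<le> n - k")
      case True then have "omega n k \<in> U2 p n k" by (intro U2I[of p k "n-k"]) (auto simp: omega_def)
      then show ?thesis using False by simp
    next
      case nt: False
      have e: "n - k = p*k" "n - (p+1)*k = 0" using nt om by (auto simp: algebra_simps)
      have "omega n k \<in> U1 p n k"
      proof (rule U1I[of k k 0])
        show "omega n k = zs (p * k - 0) @ os (k - 1) @ zs 0 @ [True] @ concat (replicate (k - k) (zs p @ [True])) @ zs (n - (p + 1) * k)"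
          using False e by (cases k) (auto simp: omega_def replicate_append_same)
      qed (use False in auto)
      then show ?thesis using False by simp
    qed
  qed
next
  case (z n k w)
  show ?case
  proof (cases "k = 0")
    case True then show ?thesis using z by (simp add: replicate_append_same)
  next
    case False
    then have w: "w \<in> U1 p n k \<union> U2 p n k" using z by simp
    have "w @ [False] \<in> U1 p (Suc n) k \<union> U2 p (Suc n) k"
    proof (cases "w \<in> U1 p n k")
      case True
      then obtain j i where ji: "j \<in> {1..k}" "i \<le> p - 1"
        "w = zs (p * j - i) @ os (j - 1) @ zs i @ [True] @ concat (replicate (k - j) (zs p @ [True])) @ zs (n - (p + 1) * k)"
        by (rule U1E) auto
      have "Suc n - (p+1)*k = Suc (n - (p+1)*k)" using z by (simp add: Suc_diff_le)
      then have "w @ [False] \<in> U1 p (Suc n) k" using ji by (intro U1I[of j k i]) (auto simp: replicate_append_same)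
      then show ?thesis by simp
    next
      case False
      then obtain i where i: "p * k + 1 \<le> i" "i \<le> n - k" "w = zs i @ os k @ zs (n - i - k)"
        using w False by (auto elim: U2E)
      have "Suc n - i - k = Suc (n - i - k)" using i z by (simp add: Suc_diff_le)
      then have "w @ [False] \<in> U2 p (Suc n) k" using i by (intro U2I[of p k i]) (auto simp: replicate_append_same)
      then show ?thesis by simp
    qed
    then show ?thesis using False by simp
  qed
next
  case (o n k w)
  have e: "n = (p+1)*k + p" using \<open>Suc n = (p+1)*(Suc k)\<close> by (simp add: algebra_simps)
  have "w @ [True] \<in> U1 p (Suc n) (Suc k)"
  proof (cases "k = 0")
    case True
    then have w: "w = zs p" using o e by simp
    show ?thesis by (rule U1I[of 1 "Suc k" 0]) (use w True e in auto)
  next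
    case False
    then have w: "w \<in> U1 p n k \<union> U2 p n k" using o by simp
    show ?thesis
    proof (cases "w \<in> U1 p n k")
      case True
      then obtain j i where ji: "j \<in> {1..k}" "i \<le> p - 1"
        "w = zs (p * j - i) @ os (j - 1) @ zs i @ [True] @ concat (replicate (k - j) (zs p @ [True])) @ zs (n - (p + 1) * k)"
        by (rule U1E) auto
      have sk: "Suc k - j = Suc (k - j)" using ji(1) by (simp add: Suc_diff_le)
      have r: "concat (replicate (Suc (k - j)) (zs p @ [True])) = concat (replicate (k - j) (zs p @ [True])) @ zs p @ [True]"
        by (rule concat_rep_snoc)
      show ?thesis
        by (rule U1I[of j "Suc k" i]) (use ji e sk r in auto)
    next
      case False
      then obtain i where i: "p * k + 1 \<le> i" "i \<le> n - k" "w = zs i @ os k @ zs (n - i - k)"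
        using w False by (auto elim: U2E)
      define i' where "i' = n - i - k"
      have i'p: "i' \<le> p - 1" "p * Suc k - i' = i" using i e unfolding i'_def by (auto simp: algebra_simps)
      show ?thesis
        by (rule U1I[of "Suc k" "Suc k" i']) (use i i'p e in \<open>auto simp: i'_def replicate_append_same\<close>)
    qed
  qed
  then show ?case by simp
qed

lemma G_blocks: "G p ((p+1)*j) j w \<Longrightarrow> G p ((p+1)*(j+t)) (j+t) (w @ concat (replicate t (zs p @ [True])))"
proof (induction t)
  case 0 then show ?case by simp
next
  case (Suc t)
  have g: "G p ((p+1)*(j+t)) (j+t) (w @ concat (replicate t (zs p @ [True])))" using Suc by simp
  have g2: "G p ((p+1)*(j+t) + p) (j+t) ((w @ concat (replicate t (zs p @ [True]))) @ zs p)" by (rule G_zs[OF g]) simp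
  have g3: "G p (Suc ((p+1)*(j+t) + p)) (Suc (j+t)) (((w @ concat (replicate t (zs p @ [True]))) @ zs p) @ [True])"
    by (rule G.o[OF g2]) (simp add: algebra_simps)
  have r: "concat (replicate (Suc t) (zs p @ [True])) = concat (replicate t (zs p @ [True])) @ zs p @ [True]"
    by (rule concat_rep_snoc)
  have idx: "Suc ((p+1)*(j+t) + p) = (p+1)*(j + Suc t)" by (simp add: algebra_simps)
  have X: "((w @ concat (replicate t (zs p @ [True]))) @ zs p) @ [True] = w @ concat (replicate (Suc t) (zs p @ [True]))"
    by (simp only: r append_assoc)
  have s: "Suc (j+t) = j + Suc t" by simp
  show ?case using g3 unfolding X idx s .
qed

lemma CL_G: assumes "0 < k" "(p+1)*k \<le> n" "w \<in> U1 p n k \<union> U2 p n k" shows "G p n k w"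
proof (cases "w \<in> U1 p n k")
  case True
  then obtain j i where ji: "1 \<le> j" "j \<le> k" "i \<le> p - 1"
    and w: "w = zs (p * j - i) @ os (j - 1) @ zs i @ [True] @ concat (replicate (k - j) (zs p @ [True])) @ zs (n - (p + 1) * k)"
    by (rule U1E)
  have ip: "i \<le> p" using ji(3) by auto
  obtain j1 where j: "j = Suc j1" using ji by (cases j) auto
  have pj: "p*j = p*j1 + p" using j by simp
  have le: "(p+1)*j1 \<le> (p*j - i) + j1" using ip pj by (simp add: algebra_simps)
  have g1: "G p ((p*j - i) + j1) j1 (omega ((p*j - i) + j1) j1)" by (rule G.om[OF le])
  have g2: "G p ((p*j - i) + j1 + i) j1 (omega ((p*j - i) + j1) j1 @ zs i)" by (rule G_zs[OF g1 le])
  have e: "Suc ((p*j - i) + j1 + i) = (p+1)*(Suc j1)" using ip pj by (simp add: algebra_simps)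
  have g3': "G p ((p+1)*(Suc j1)) (Suc j1) ((omega ((p*j - i) + j1) j1 @ zs i) @ [True])" using G.o[OF g2 e] unfolding e .
  have g3: "G p ((p+1)*j) j ((omega ((p*j - i) + j1) j1 @ zs i) @ [True])" using g3' j by simp
  have g4: "G p ((p+1)*(j + (k-j))) (j + (k-j)) (((omega ((p*j - i) + j1) j1 @ zs i) @ [True]) @ concat (replicate (k-j) (zs p @ [True])))"
    by (rule G_blocks[OF g3])
  have g5: "G p ((p+1)*k + (n - (p+1)*k)) k ((((omega ((p*j - i) + j1) j1 @ zs i) @ [True]) @ concat (replicate (k-j) (zs p @ [True]))) @ zs (n - (p+1)*k))"
    by (rule G_zs) (use g4 ji in auto)
  then show ?thesis using w j assms(2) by (simp add: omega_def)
next
  case False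
  then obtain i where i: "p * k + 1 \<le> i" "i \<le> n - k" "w = zs i @ os k @ zs (n - i - k)"
    using assms(3) False by (auto elim: U2E)
  have "G p (i + k + (n - i - k)) k (omega (i+k) k @ zs (n - i - k))"
    by (rule G_zs[OF G.om]) (use i in \<open>auto simp: algebra_simps\<close>)
  then show ?thesis using i by (simp add: omega_def)
qed

lemma Gen_CL: "0 < k \<Longrightarrow> (p+1)*k \<le> n \<Longrightarrow> Gen p n k = U1 p n k \<union> U2 p n k"
  unfolding Gen_eq using G_CL CL_G by fastforce

lemma concat_rep_T: "concat (replicate t [True]) = os t"
  by (induct t) auto

lemma os_split: "os (a + Suc b) = os a @ [True] @ os b"
  by (induct a) auto

lemma p0_form: assumes "0 < k"
  shows "U1 0 n k \<union> U2 0 n k = {zs i @ os k @ zs (n - i - k) | i. i \<le> n - k}"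
proof
  show "U1 0 n k \<union> U2 0 n k \<subseteq> {zs i @ os k @ zs (n - i - k) | i. i \<le> n - k}"
  proof
    fix w assume "w \<in> U1 0 n k \<union> U2 0 n k"
    then show "w \<in> {zs i @ os k @ zs (n - i - k) | i. i \<le> n - k}"
    proof
      assume "w \<in> U1 0 n k"
      then obtain j i where ji: "1 \<le> j" "j \<le> k" "i \<le> 0 - 1"
        "w = zs (0 * j - i) @ os (j - 1) @ zs i @ [True] @ concat (replicate (k - j) (zs 0 @ [True])) @ zs (n - (0 + 1) * k)"
        by (rule U1E)
      have kk: "(j - 1) + Suc (k - j) = k" using ji by simp
      have "os (j-1) @ [True] @ os (k - j) = os k"
        using os_split[of "j-1" "k-j"] kk by simp
      then have "w = zs 0 @ os k @ zs (n - 0 - k)" using ji by (simp add: concat_rep_T)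
      then show ?thesis by (intro CollectI exI[of _ 0]) auto
    next
      assume "w \<in> U2 0 n k"
      then obtain i where "0 * k + 1 \<le> i" "i \<le> n - k" "w = zs i @ os k @ zs (n - i - k)" by (rule U2E)
      then show ?thesis by (intro CollectI exI[of _ i]) auto
    qed
  qed
next
  show "{zs i @ os k @ zs (n - i - k) | i. i \<le> n - k} \<subseteq> U1 0 n k \<union> U2 0 n k"
  proof
    fix w assume "w \<in> {zs i @ os k @ zs (n - i - k) | i. i \<le> n - k}"
    then obtain i where i: "i \<le> n - k" "w = zs i @ os k @ zs (n - i - k)" by auto
    show "w \<in> U1 0 n k \<union> U2 0 n k"
    proof (cases "i = 0")
      case True
      have "os k = os (1 - 1) @ [True] @ os (k - 1)" using assms by (cases k) auto
      then have "w \<in> U1 0 n k" using i True assms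
        by (intro U1I[of 1 k 0]) (auto simp: concat_rep_T)
      then show ?thesis by simp
    next
      case False
      then have "w \<in> U2 0 n k" using i by (intro U2I[of 0 k i]) auto
      then show ?thesis by simp
    qed
  qed
qed

lemma G_set_nontight: assumes "0 < k" "(p+1)*k \<le> m"
  shows "{w. G p (Suc m) k w} = insert (omega (Suc m) k) ((\<lambda>u. u@[False]) ` {w. G p m k w})"
proof
  show "{w. G p (Suc m) k w} \<subseteq> insert (omega (Suc m) k) ((\<lambda>u. u@[False]) ` {w. G p m k w})"
  proof
    fix w assume "w \<in> {w. G p (Suc m) k w}"
    then have g: "G p (Suc m) k w" by simp
    then have "w \<noteq> []" using G_C Cw_nonempty by blast
    then obtain v b where w: "w = v @ [b]" by (metis rev_exhaust)
    show "w \<in> insert (omega (Suc m) k) ((\<lambda>u. u@[False]) ` {w. G p m k w})"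
    proof (cases b)
      case True
      then have "v @ [True] = omega (Suc m) k" using g w G_inv1[OF assms(1)] assms(2) by auto
      then show ?thesis using w True by simp
    next
      case False
      then show ?thesis using g w G_inv0[OF assms(1)] by auto
    qed
  qed
next
  show "insert (omega (Suc m) k) ((\<lambda>u. u@[False]) ` {w. G p m k w}) \<subseteq> {w. G p (Suc m) k w}"
    using G.om[of p k "Suc m"] G.z[of p m k] assms by auto
qed

lemma G_set_tight: assumes "0 < k" "Suc m = (p+1)*k"
  shows "{w. G p (Suc m) k w} = (\<lambda>u. u@[True]) ` {w. G p m (k-1) w}"
proof
  have om: "omega (Suc m) k = omega m (k-1) @ [True]"
    using omega_snocT[of "k-1" m] assms by (simp add: algebra_simps)
  show "{w. G p (Suc m) k w} \<subseteq> (\<lambda>u. u@[True]) ` {w. G p m (k-1) w}"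
  proof
    fix w assume "w \<in> {w. G p (Suc m) k w}"
    then have g: "G p (Suc m) k w" by simp
    then have "w \<noteq> []" using G_C Cw_nonempty by blast
    then obtain v b where w: "w = v @ [b]" by (metis rev_exhaust)
    show "w \<in> (\<lambda>u. u@[True]) ` {w. G p m (k-1) w}"
    proof (cases b)
      case True
      have le: "(p+1)*(k-1) \<le> m" using assms by (cases k) (auto simp: algebra_simps)
      have "v = omega m (k-1) \<or> G p m (k-1) v" using g w True G_inv1[OF assms(1)] om by auto
      then have "G p m (k-1) v" using G.om[OF le] by auto
      then show ?thesis using w True by simp
    next
      case False
      then have "(p+1)*k \<le> m" using g w G_inv0[OF assms(1)] by auto
      then show ?thesis using assms by simp
    qed
  qed
next
  show "(\<lambda>u. u@[True]) ` {w. G p m (k-1) w} \<subseteq> {w. G p (Suc m) k w}"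
    using G.o[of p m "k-1"] assms by auto
qed

lemma finite_G: "finite {w. G p n k w}"
  by (rule finite_subset[OF _ finite_Cw[of n p k]]) (auto intro: G_C)

lemma card_G: "0 < k \<Longrightarrow> (p+1)*k \<le> n \<Longrightarrow> card {w. G p n k w} + p + k = n + 1"
proof (induction n arbitrary: k)
  case 0 then show ?case by simp
next
  case (Suc m)
  show ?case
  proof (cases "(p+1)*k \<le> m")
    case True
    have "card {w. G p (Suc m) k w} = Suc (card {w. G p m k w})"
    proof -
      let ?X = "{w. G p m k w}"
      have fin: "finite ((\<lambda>u. u@[False]) ` ?X)" using finite_G by blast
      have notin: "omega (Suc m) k \<notin> (\<lambda>u. u@[False]) ` ?X" using omega_not_F[OF Suc.prems(1)] by blast
      have ci: "card ((\<lambda>u. u@[False]) ` ?X) = card ?X" by (rule card_image) (auto simp: inj_on_def)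
      show ?thesis unfolding G_set_nontight[OF Suc.prems(1) True] card_insert_disjoint[OF fin notin] ci ..
    qed
    then show ?thesis using Suc.IH[OF Suc.prems(1) True] by simp
  next
    case False
    then have tight: "Suc m = (p+1)*k" using Suc.prems by simp
    have c: "card {w. G p (Suc m) k w} = card {w. G p m (k-1) w}"
      unfolding G_set_tight[OF Suc.prems(1) tight] by (rule card_image) (auto simp: inj_on_def)
    show ?thesis
    proof (cases "k = 1")
      case True
      then have "{w. G p m (k-1) w} = {zs m}" using G0 by auto
      then show ?thesis using c tight True by simp
    next
      case False
      then have k1: "0 < k - 1" using Suc.prems by simp
      have le: "(p+1)*(k-1) \<le> m" using tight Suc.prems by (cases k) (auto simp: algebra_simps)
      have "card {w. G p m (k-1) w} + p + (k-1) = m + 1" by (rule Suc.IH[OF k1 le])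
      then show ?thesis using c Suc.prems by simp
    qed
  qed
qed

theorem proposition2:
  fixes p k n :: nat
  assumes "k \<ge> 1" and "n \<ge> (p + 1) * k"
  shows "(p \<ge> 1 \<longrightarrow>
            Gen p n k =
              (\<Union>j\<in>{1..k}. {zs (p * j - i) @ os (j - 1) @ zs i @ [True]
                                @ concat (replicate (k - j) (zs p @ [True]))
                                @ zs (n - (p + 1) * k) | i. i \<le> p - 1})
              \<union> {zs i @ os k @ zs (n - i - k) | i. p * k + 1 \<le> i \<and> i \<le> n - k})
       \<and> (p = 0 \<longrightarrow> Gen 0 n k = {zs i @ os k @ zs (n - i - k) | i. i \<le> n - k})
       \<and> card (Gen p n k) = n - k + 1 - p"
proof -
  have k: "0 < k" using assms(1) by simp
  have kn: "(p+1)*k \<le> n" using assms(2) by simp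
  have GC: "Gen p n k = U1 p n k \<union> U2 p n k" by (rule Gen_CL[OF k kn])
  have c: "card (Gen p n k) + p + k = n + 1" using card_G[OF k kn] Gen_eq by simp
  show ?thesis
  proof (intro conjI impI)
    show "Gen p n k =
              (\<Union>j\<in>{1..k}. {zs (p * j - i) @ os (j - 1) @ zs i @ [True]
                                @ concat (replicate (k - j) (zs p @ [True]))
                                @ zs (n - (p + 1) * k) | i. i \<le> p - 1})
              \<union> {zs i @ os k @ zs (n - i - k) | i. p * k + 1 \<le> i \<and> i \<le> n - k}"
      using GC unfolding U1_def U2_def .
  next
    assume p0: "p = 0"
    show "Gen 0 n k = {zs i @ os k @ zs (n - i - k) | i. i \<le> n - k}"
      using GC p0_form[OF k, of n] p0 by simp
  next
    have "k + p*k \<le> n" using kn by (simp add: algebra_simps)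
    then have "k \<le> n" by linarith
    then show "card (Gen p n k) = n - k + 1 - p" using c by arith
  qed
qed

end
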